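(* Consider the perturbed federated algorithm described in the context, with $\beta\in(0,1)$, run for $T\ge1$ rounds with constant step size $\gamma=[2L\sqrt{TE}]^{-1}$. Assume that the bounded variance, bounded stochastic gradient norm, $L$-smoothness and lower-bounded objective assumptions of the context hold. Let $\widehat{\mathbf{w}}_T$ be drawn uniformly at random from $\{\overline{\mathbf{w}}_{t,k}:0\le t\le T-1,\,0\le k\le E-1\}$. Then $$\mathbb{E}\|\nabla F(\widehat{\mathbf{w}}_T)\|^2\le\frac1{\sqrt T}\Big[\frac{4L\Delta}{\sqrt E}+\frac{S\sigma^2}{2\sqrt E}\Big]+\frac{EG^2}{T}\Big[4+(1-\beta)^2+8\Big(1-\frac1\beta\Big)^2\Big],$$ where $\Delta=F(\overline{\mathbf{w}}_{0,0})-f_{\inf}$ and $S=\sum_ip_i^2$.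
   Context: Setting: there are $C$ clients with local objectives $F_i:\mathbb{R}^D\to\mathbb{R}$. Similarity weights $p_{in}\ge0$ are symmetric, satisfy $p_{ii}=0$, and $\sum_{i,n}p_{in}=1$. Let $p_i=\sum_np_{in}>0$. The global objective is $F=\sum_ip_iF_i$. Algorithm, with parameter $\beta$, $E\ge1$ local steps and step sizes $\gamma_t$, all clients participating: - $\mathbf{u}^i_0=\overline{\mathbf{w}}_{0,0}$. - In round $t$, each client sets $\mathbf{w}^i_{t,0}=\overline{\mathbf{w}}_{t,0}$. For $k=0,\dots,E-1$ it forms $\widetilde{\mathbf{w}}^i_{t,k}=\beta\mathbf{w}^i_{t,k}+(1-\beta)\mathbf{u}^i_t$ and updates $\mathbf{w}^i_{t,k+1}=\mathbf{w}^i_{t,k}-\gamma_tg_i(\widetilde{\mathbf{w}}^i_{t,k})$, with stochastic gradients $g_i$ of $F_i$ sampled independently across clients and steps given the past. - $\overline{\mathbf{w}}_{t,k}=\sum_ip_i\mathbf{w}^i_{t,k}$ and $\overline{\mathbf{w}}_{t+1,0}=\overline{\mathbf{w}}_{t,E}$. - For $t\ge1$, $\mathbf{u}^i_t=\frac1{p_i}\sum_np_{in}\mathbf{w}^n_{t-1,E}$. $\mathbb{E}$ denotes total expectation. Assumptions: - Bounded variance: $\mathbb{E}\,g_i(\widetilde{\mathbf{w}}^i_{t,k})=\nabla F_i(\widetilde{\mathbf{w}}^i_{t,k})$ and $\mathbb{E}\|g_i(\widetilde{\mathbf{w}}^i_{t,k})-\nabla F_i(\widetilde{\mathbf{w}}^i_{t,k})\|^2\le\sigma^2$.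 - Bounded stochastic gradient norm: $\mathbb{E}\|g_i(\widetilde{\mathbf{w}}^i_{t,k})\|^2\le G^2$. - $L$-smoothness: each $\nabla F_i$ is $L$-Lipschitz. - Lower-bounded objective: $F\ge f_{\inf}$. *)

theory Defs
  imports "HOL-Probability.Probability"
begin

text \<open>Clients are indexed by 0..C-1. p i n are the similarity weights,
  pw p C i = p_i = sum_n p_in.\<close>

definition pw :: "(nat \<Rightarrow> nat \<Rightarrow> real) \<Rightarrow> nat \<Rightarrow> nat \<Rightarrow> real" where
  "pw p C i = (\<Sum>n<C. p i n)"

text \<open>Anchor u^i_t for t >= 1, computed from the previous round's final client
  iterates Wprev n = w^n_{t-1,E}.\<close>

definition anchor_of :: "nat \<Rightarrow> (nat \<Rightarrow> nat \<Rightarrow> real) \<Rightarrow> (nat \<Rightarrow> 'v::real_vector) \<Rightarrow> nat \<Rightarrow> 'v" where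
  "anchor_of C p Wprev i = (1 / pw p C i) *\<^sub>R (\<Sum>n<C. p i n *\<^sub>R Wprev n)"

text \<open>The stochastic gradient at step (t,k) is G i x (xi i t k), where xi i t k is the
  realised random sample of client i at round t, local step k.\<close>

fun local_iter :: "real \<Rightarrow> real \<Rightarrow> (nat \<Rightarrow> 'v::real_vector \<Rightarrow> 'x \<Rightarrow> 'v) \<Rightarrow>
    (nat \<Rightarrow> nat \<Rightarrow> nat \<Rightarrow> 'x) \<Rightarrow> nat \<Rightarrow> nat \<Rightarrow> 'v \<Rightarrow> 'v \<Rightarrow> nat \<Rightarrow> 'v" where
  "local_iter \<beta> \<gamma> G xi i t u w0 0 = w0"
| "local_iter \<beta> \<gamma> G xi i t u w0 (Suc k) =
     (let w = local_iter \<beta> \<gamma> G xi i t u w0 k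
      in w - \<gamma> *\<^sub>R G i (\<beta> *\<^sub>R w + (1 - \<beta>) *\<^sub>R u) (xi i t k))"

primrec client_iter :: "nat \<Rightarrow> (nat \<Rightarrow> nat \<Rightarrow> real) \<Rightarrow> real \<Rightarrow> real \<Rightarrow> nat \<Rightarrow>
    (nat \<Rightarrow> 'v::real_vector \<Rightarrow> 'x \<Rightarrow> 'v) \<Rightarrow> 'v \<Rightarrow> (nat \<Rightarrow> nat \<Rightarrow> nat \<Rightarrow> 'x) \<Rightarrow>
    nat \<Rightarrow> nat \<Rightarrow> nat \<Rightarrow> 'v" where
  "client_iter C p \<beta> \<gamma> E G w0 xi 0 = (\<lambda>i k. local_iter \<beta> \<gamma> G xi i 0 w0 w0 k)"
| "client_iter C p \<beta> \<gamma> E G w0 xi (Suc t) =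
     (let Wp = client_iter C p \<beta> \<gamma> E G w0 xi t;
          wb = (\<Sum>n<C. pw p C n *\<^sub>R Wp n E)
      in (\<lambda>i k. local_iter \<beta> \<gamma> G xi i (Suc t) (anchor_of C p (\<lambda>n. Wp n E) i) wb k))"

definition anchor :: "nat \<Rightarrow> (nat \<Rightarrow> nat \<Rightarrow> real) \<Rightarrow> real \<Rightarrow> real \<Rightarrow> nat \<Rightarrow>
    (nat \<Rightarrow> 'v::real_vector \<Rightarrow> 'x \<Rightarrow> 'v) \<Rightarrow> 'v \<Rightarrow> (nat \<Rightarrow> nat \<Rightarrow> nat \<Rightarrow> 'x) \<Rightarrow>
    nat \<Rightarrow> nat \<Rightarrow> 'v" where
  "anchor C p \<beta> \<gamma> E G w0 xi t i =
     (if t = 0 then w0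
      else anchor_of C p (\<lambda>n. client_iter C p \<beta> \<gamma> E G w0 xi (t - 1) n E) i)"

definition pert_iter :: "nat \<Rightarrow> (nat \<Rightarrow> nat \<Rightarrow> real) \<Rightarrow> real \<Rightarrow> real \<Rightarrow> nat \<Rightarrow>
    (nat \<Rightarrow> 'v::real_vector \<Rightarrow> 'x \<Rightarrow> 'v) \<Rightarrow> 'v \<Rightarrow> (nat \<Rightarrow> nat \<Rightarrow> nat \<Rightarrow> 'x) \<Rightarrow>
    nat \<Rightarrow> nat \<Rightarrow> nat \<Rightarrow> 'v" where
  "pert_iter C p \<beta> \<gamma> E G w0 xi t i k =
     \<beta> *\<^sub>R client_iter C p \<beta> \<gamma> E G w0 xi t i k + (1 - \<beta>) *\<^sub>R anchor C p \<beta> \<gamma> E G w0 xi t i"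

definition avg_iter :: "nat \<Rightarrow> (nat \<Rightarrow> nat \<Rightarrow> real) \<Rightarrow> real \<Rightarrow> real \<Rightarrow> nat \<Rightarrow>
    (nat \<Rightarrow> 'v::real_vector \<Rightarrow> 'x \<Rightarrow> 'v) \<Rightarrow> 'v \<Rightarrow> (nat \<Rightarrow> nat \<Rightarrow> nat \<Rightarrow> 'x) \<Rightarrow>
    nat \<Rightarrow> nat \<Rightarrow> 'v" where
  "avg_iter C p \<beta> \<gamma> E G w0 xi t k =
     (\<Sum>i<C. pw p C i *\<^sub>R client_iter C p \<beta> \<gamma> E G w0 xi t i k)"

end

theory Submission
  imports Defs
begin

lemma ci_Suc:
  "client_iter C p \<beta> \<gamma> E G w0 xi t i (Suc k) =
   client_iter C p \<beta> \<gamma> E G w0 xi t i k - \<gamma> *\<^sub>R G i (pert_iter C p \<beta> \<gamma> E G w0 xi t i k) (xi i t k)"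
  by (cases t) (simp_all add: Let_def pert_iter_def anchor_def)

lemma ci_0:
  "client_iter C p \<beta> \<gamma> E G w0 xi t i 0 =
   (if t = 0 then w0 else (\<Sum>n<C. pw p C n *\<^sub>R client_iter C p \<beta> \<gamma> E G w0 xi (t-1) n E))"
  by (cases t) (simp_all add: Let_def)

lemma anchor_Suc:
  "anchor C p \<beta> \<gamma> E G w0 xi (Suc t) i = (1 / pw p C i) *\<^sub>R (\<Sum>n<C. p i n *\<^sub>R client_iter C p \<beta> \<gamma> E G w0 xi t n E)"
  by (simp add: anchor_def anchor_of_def)

declare client_iter.simps[simp del]

lemma ci_cong:
  assumes "\<And>i' t' k'. i' < C \<Longrightarrow> (t' < t \<and> k' < E \<or> t' = t \<and> k' < k) \<Longrightarrow> xa i' t' k' = xb i' t' k'"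
    and "i < C"
  shows "client_iter C p \<beta> \<gamma> E G w0 xa t i k = client_iter C p \<beta> \<gamma> E G w0 xb t i k
    \<and> anchor C p \<beta> \<gamma> E G w0 xa t i = anchor C p \<beta> \<gamma> E G w0 xb t i"
  using assms
proof (induction t arbitrary: i k)
  case 0
  have A: "anchor C p \<beta> \<gamma> E G w0 xa 0 i = anchor C p \<beta> \<gamma> E G w0 xb 0 i"
    by (simp add: anchor_def)
  have "client_iter C p \<beta> \<gamma> E G w0 xa 0 i k' = client_iter C p \<beta> \<gamma> E G w0 xb 0 i k'" if "k' \<le> k" for k'
    using that
  proof (induction k')
    case 0 then show ?case by (simp add: ci_0)
  next
    case (Suc k')
    then show ?case using "0.prems" A by (simp add: ci_Suc pert_iter_def)
  qed
  then show ?case using A by simp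
next
  case (Suc t)
  have prev: "client_iter C p \<beta> \<gamma> E G w0 xa t n E = client_iter C p \<beta> \<gamma> E G w0 xb t n E" if "n < C" for n
  proof -
    have "\<And>i' t' k'. i' < C \<Longrightarrow> (t' < t \<and> k' < E \<or> t' = t \<and> k' < E) \<Longrightarrow> xa i' t' k' = xb i' t' k'"
      using Suc.prems(1) by auto
    then show ?thesis using Suc.IH[of E n] that by blast
  qed
  have A: "anchor C p \<beta> \<gamma> E G w0 xa (Suc t) i = anchor C p \<beta> \<gamma> E G w0 xb (Suc t) i"
    by (simp add: anchor_Suc prev)
  have hx: "xa i (Suc t) k' = xb i (Suc t) k'" if "k' < k" for k'
    using Suc.prems that by auto
  have "client_iter C p \<beta> \<gamma> E G w0 xa (Suc t) i k' = client_iter C p \<beta> \<gamma> E G w0 xb (Suc t) i k'" if "k' \<le> k" for k'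
    using that
  proof (induction k')
    case 0 then show ?case by (simp add: ci_0 prev)
  next
    case (Suc k')
    then show ?case using hx A by (simp add: ci_Suc pert_iter_def)
  qed
  then show ?case using A by simp
qed

lemma G_comp_meas:
  fixes G :: "'v::euclidean_space \<Rightarrow> 'x \<Rightarrow> 'w::euclidean_space"
  assumes "(\<lambda>(w, x). G w x) \<in> borel \<Otimes>\<^sub>M X \<rightarrow>\<^sub>M borel"
    and "f \<in> borel_measurable N" and "h \<in> N \<rightarrow>\<^sub>M X"
  shows "(\<lambda>n. G (f n) (h n)) \<in> borel_measurable N"
  using measurable_compose[OF measurable_Pair[OF assms(2,3)] assms(1)] by simp

lemma ci_meas:
  fixes G :: "nat \<Rightarrow> 'v::euclidean_space \<Rightarrow> 'x \<Rightarrow> 'v"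
  assumes Gm: "\<And>i. i < C \<Longrightarrow> (\<lambda>(w, x). G i w x) \<in> borel \<Otimes>\<^sub>M X \<rightarrow>\<^sub>M borel"
    and Pm: "\<And>i' t' k'. i' < C \<Longrightarrow> (t' < t \<and> k' < E \<or> t' = t \<and> k' < k) \<Longrightarrow> (\<lambda>n. \<Phi> n i' t' k') \<in> N \<rightarrow>\<^sub>M X"
    and "i < C"
  shows "(\<lambda>n. client_iter C p \<beta> \<gamma> E G w0 (\<Phi> n) t i k) \<in> borel_measurable N
    \<and> (\<lambda>n. anchor C p \<beta> \<gamma> E G w0 (\<Phi> n) t i) \<in> borel_measurable N"
  using Pm \<open>i < C\<close>
proof (induction t arbitrary: i k)
  case 0
  have A: "(\<lambda>n. anchor C p \<beta> \<gamma> E G w0 (\<Phi> n) 0 i) \<in> borel_measurable N"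
    by (simp add: anchor_def)
  have "(\<lambda>n. client_iter C p \<beta> \<gamma> E G w0 (\<Phi> n) 0 i k') \<in> borel_measurable N" if "k' \<le> k" for k'
    using that
  proof (induction k')
    case 0 then show ?case by (simp add: ci_0)
  next
    case (Suc k')
    have h: "(\<lambda>n. \<Phi> n i 0 k') \<in> N \<rightarrow>\<^sub>M X" using "0.prems" Suc.prems by auto
    have pm: "(\<lambda>n. pert_iter C p \<beta> \<gamma> E G w0 (\<Phi> n) 0 i k') \<in> borel_measurable N"
      unfolding pert_iter_def using Suc A by (intro borel_measurable_add borel_measurable_scaleR) auto
    show ?case unfolding ci_Suc
      using Suc G_comp_meas[OF Gm[OF "0.prems"(2)] pm h] by (intro borel_measurable_diff borel_measurable_scaleR) auto
  qed
  then show ?case using A by simp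
next
  case (Suc t)
  have prev: "(\<lambda>n. client_iter C p \<beta> \<gamma> E G w0 (\<Phi> n) t j E) \<in> borel_measurable N" if "j < C" for j
  proof -
    have "\<And>i' t' k'. i' < C \<Longrightarrow> (t' < t \<and> k' < E \<or> t' = t \<and> k' < E) \<Longrightarrow> (\<lambda>n. \<Phi> n i' t' k') \<in> N \<rightarrow>\<^sub>M X"
      using Suc.prems(1) by auto
    then show ?thesis using Suc.IH[of E j] that by blast
  qed
  have A: "(\<lambda>n. anchor C p \<beta> \<gamma> E G w0 (\<Phi> n) (Suc t) i) \<in> borel_measurable N"
    unfolding anchor_Suc using prev by (intro borel_measurable_sum borel_measurable_scaleR) auto
  have hx: "(\<lambda>n. \<Phi> n i (Suc t) k') \<in> N \<rightarrow>\<^sub>M X" if "k' < k" for k'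
    using Suc.prems that by auto
  have "(\<lambda>n. client_iter C p \<beta> \<gamma> E G w0 (\<Phi> n) (Suc t) i k') \<in> borel_measurable N" if "k' \<le> k" for k'
    using that
  proof (induction k')
    case 0 then show ?case unfolding ci_0 using prev by (simp add: borel_measurable_sum borel_measurable_scaleR)
  next
    case (Suc k')
    have pm: "(\<lambda>n. pert_iter C p \<beta> \<gamma> E G w0 (\<Phi> n) (Suc t) i k') \<in> borel_measurable N"
      unfolding pert_iter_def using Suc A by (intro borel_measurable_add borel_measurable_scaleR) auto
    show ?case unfolding ci_Suc
      using Suc G_comp_meas[OF Gm[OF \<open>i < C\<close>] pm hx] by (intro borel_measurable_diff borel_measurable_scaleR) auto
  qed
  then show ?case using A by simp
qed

lemma (in prob_space) indep_fresh_integral: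
  fixes h :: "('j \<Rightarrow> 'x) \<times> 'x \<Rightarrow> real"
  assumes ind: "indep_vars (\<lambda>_. X) Y I" and JI: "J \<subseteq> I" and j0: "j0 \<in> I" "j0 \<notin> J"
    and hm: "h \<in> borel_measurable (PiM J (\<lambda>_. X) \<Otimes>\<^sub>M X)"
    and hi: "integrable M (\<lambda>\<omega>. h (restrict (\<lambda>j. Y j \<omega>) J, Y j0 \<omega>))"
  shows "(\<integral>\<omega>. h (restrict (\<lambda>j. Y j \<omega>) J, Y j0 \<omega>) \<partial>M)
       = (\<integral>\<omega>. (\<integral>\<omega>'. h (restrict (\<lambda>j. Y j \<omega>) J, Y j0 \<omega>') \<partial>M) \<partial>M)"
proof -
  define Z where "Z = (\<lambda>\<omega>. restrict (\<lambda>j. Y j \<omega>) J)"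
  define Z' where "Z' = (\<lambda>\<omega>. restrict (\<lambda>j. Y j \<omega>) {j0})"
  define D1 where "D1 = distr M (PiM J (\<lambda>_. X)) Z"
  define D2 where "D2 = distr M (PiM {j0} (\<lambda>_. X)) Z'"
  define h' where "h' = (\<lambda>(z::'j \<Rightarrow> 'x, z'::'j \<Rightarrow> 'x). h (z, z' j0))"
  have i1: "indep_var (PiM J (\<lambda>_. X)) Z (PiM {j0} (\<lambda>_. X)) Z'"
    unfolding Z_def Z'_def using indep_var_restrict[OF ind, of J "{j0}"] JI j0 by auto
  then have Zm[measurable]: "Z \<in> M \<rightarrow>\<^sub>M PiM J (\<lambda>_. X)" and Ym[measurable]: "Z' \<in> M \<rightarrow>\<^sub>M PiM {j0} (\<lambda>_. X)"
    and deq: "D1 \<Otimes>\<^sub>M D2 = distr M (PiM J (\<lambda>_. X) \<Otimes>\<^sub>M PiM {j0} (\<lambda>_. X)) (\<lambda>\<omega>. (Z \<omega>, Z' \<omega>))"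
    using indep_var_distribution_eq[of "PiM J (\<lambda>_. X)" Z "PiM {j0} (\<lambda>_. X)" Z'] unfolding D1_def D2_def by auto
  have hm'[measurable]: "h' \<in> borel_measurable (PiM J (\<lambda>_. X) \<Otimes>\<^sub>M PiM {j0} (\<lambda>_. X))"
  proof -
    have "(\<lambda>(z::'j \<Rightarrow> 'x, z'::'j \<Rightarrow> 'x). (z, z' j0)) \<in> (PiM J (\<lambda>_. X) \<Otimes>\<^sub>M PiM {j0} (\<lambda>_. X)) \<rightarrow>\<^sub>M (PiM J (\<lambda>_. X) \<Otimes>\<^sub>M X)"
      by measurable
    from measurable_compose[OF this hm] show ?thesis unfolding h'_def by (simp add: case_prod_beta')
  qed
  have hZ: "h' (Z \<omega>, Z' \<omega>) = h (restrict (\<lambda>j. Y j \<omega>) J, Y j0 \<omega>)" for \<omega>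
    by (simp add: h'_def Z_def Z'_def)
  interpret D1: prob_space D1 unfolding D1_def by (rule prob_space_distr) simp
  interpret D2: prob_space D2 unfolding D2_def by (rule prob_space_distr) simp
  interpret P: pair_prob_space D1 D2 by unfold_locales
  have hi': "integrable (D1 \<Otimes>\<^sub>M D2) h'"
    unfolding deq using hi
    by (subst integrable_distr_eq) (auto simp: hZ)
  have "(\<integral>\<omega>. h (restrict (\<lambda>j. Y j \<omega>) J, Y j0 \<omega>) \<partial>M) = (\<integral>\<omega>. h' (Z \<omega>, Z' \<omega>) \<partial>M)"
    by (simp add: hZ)
  also have "\<dots> = integral\<^sup>L (D1 \<Otimes>\<^sub>M D2) h'"
    unfolding deq by (subst integral_distr) auto
  also have "\<dots> = (\<integral>z. (\<integral>z'. h' (z, z') \<partial>D2) \<partial>D1)"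
    using P.integral_fst'[OF hi'] by simp
  also have "\<dots> = (\<integral>\<omega>. (\<integral>z'. h' (Z \<omega>, z') \<partial>D2) \<partial>M)"
    unfolding D1_def
  proof (subst integral_distr)
    show "(\<lambda>z. \<integral>z'. h' (z, z') \<partial>D2) \<in> borel_measurable (PiM J (\<lambda>_. X))"
      using D2.borel_measurable_lebesgue_integral[of "\<lambda>z z'. h' (z, z')" "PiM J (\<lambda>_. X)"] by (simp add: D2_def)
  qed auto
  also have "\<dots> = (\<integral>\<omega>. (\<integral>\<omega>'. h (restrict (\<lambda>j. Y j \<omega>) J, Y j0 \<omega>') \<partial>M) \<partial>M)"
  proof (rule Bochner_Integration.integral_cong[OF refl])
    fix \<omega> assume \<omega>: "\<omega> \<in> space M"
    have zm: "Z \<omega> \<in> space (PiM J (\<lambda>_. X))" using measurable_space[OF Zm \<omega>] .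
    have "(\<integral>z'. h' (Z \<omega>, z') \<partial>D2) = (\<integral>\<omega>'. h' (Z \<omega>, Z' \<omega>') \<partial>M)"
      unfolding D2_def
    proof (subst integral_distr)
      show "(\<lambda>z'. h' (Z \<omega>, z')) \<in> borel_measurable (PiM {j0} (\<lambda>_. X))"
        using zm by measurable
    qed auto
    also have "\<dots> = (\<integral>\<omega>'. h (restrict (\<lambda>j. Y j \<omega>) J, Y j0 \<omega>') \<partial>M)"
      by (simp add: h'_def Z_def Z'_def)
    finally show "(\<integral>z'. h' (Z \<omega>, z') \<partial>D2) = (\<integral>\<omega>'. h (restrict (\<lambda>j. Y j \<omega>) J, Y j0 \<omega>') \<partial>M)" .
  qed
  finally show ?thesis .
qed

lemma ab_le: "(x::real) * y \<le> x\<^sup>2 + y\<^sup>2"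
proof -
  have "0 \<le> (x - y)\<^sup>2" by simp
  then have "2 * (x * y) \<le> x\<^sup>2 + y\<^sup>2" by (simp add: power2_diff mult.assoc)
  moreover have "0 \<le> x\<^sup>2" "0 \<le> y\<^sup>2" by simp_all
  ultimately show ?thesis by linarith
qed

lemma sq2: "(x + y::real)\<^sup>2 \<le> 2 * x\<^sup>2 + 2 * y\<^sup>2"
proof -
  have "0 \<le> (x - y)\<^sup>2" by simp
  then show ?thesis by (simp add: power2_diff power2_sum mult.assoc)
qed

lemma norm_sum_sq_le:
  fixes v :: "'i \<Rightarrow> 'v::real_normed_vector"
  assumes c: "\<And>i. i \<in> A \<Longrightarrow> c i \<ge> 0"
  shows "(norm (\<Sum>i\<in>A. c i *\<^sub>R v i))\<^sup>2 \<le> (\<Sum>i\<in>A. c i) * (\<Sum>i\<in>A. c i * (norm (v i))\<^sup>2)"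
proof -
  have n0: "norm (\<Sum>i\<in>A. c i *\<^sub>R v i) \<le> (\<Sum>i\<in>A. c i * norm (v i))"
    using norm_sum[of "\<lambda>i. c i *\<^sub>R v i" A] c by (simp add: abs_of_nonneg)
  have "(norm (\<Sum>i\<in>A. c i *\<^sub>R v i))\<^sup>2 \<le> (\<Sum>i\<in>A. c i * norm (v i))\<^sup>2"
    using n0 by (intro power_mono) auto
  also have "(\<Sum>i\<in>A. c i * norm (v i)) = (\<Sum>i\<in>A. sqrt (c i) * (sqrt (c i) * norm (v i)))"
    using c by (intro sum.cong) (auto simp: real_sqrt_mult_self mult.assoc[symmetric])
  also have "(\<dots>)\<^sup>2 \<le> (\<Sum>i\<in>A. (sqrt (c i))\<^sup>2) * (\<Sum>i\<in>A. (sqrt (c i) * norm (v i))\<^sup>2)"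
    by (rule Cauchy_Schwarz_ineq_sum)
  also have "\<dots> = (\<Sum>i\<in>A. c i) * (\<Sum>i\<in>A. c i * (norm (v i))\<^sup>2)"
    using c by (intro arg_cong2[where f="(*)"] sum.cong) (auto simp: power_mult_distrib)
  finally show ?thesis .
qed

lemma descent:
  fixes f :: "'v::real_inner \<Rightarrow> real"
  assumes d: "\<And>x. (f has_derivative (\<lambda>h. g x \<bullet> h)) (at x)"
    and l: "\<And>x y. norm (g x - g y) \<le> L * norm (x - y)"
  shows "f y \<le> f x + g x \<bullet> (y - x) + L / 2 * (norm (y - x))\<^sup>2"
    and "f y \<ge> f x + g x \<bullet> (y - x) - L / 2 * (norm (y - x))\<^sup>2"
proof -
  define h where "h = y - x"
  have dd: "((\<lambda>s. f (x + s *\<^sub>R h)) has_real_derivative (g (x + s *\<^sub>R h) \<bullet> h)) (at s)" for s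
  proof -
    have "((\<lambda>s. x + s *\<^sub>R h) has_derivative (\<lambda>t. t *\<^sub>R h)) (at s)"
      by (auto intro!: derivative_eq_intros)
    from has_derivative_compose[OF this d]
    have "((\<lambda>s. f (x + s *\<^sub>R h)) has_derivative (\<lambda>t. g (x + s *\<^sub>R h) \<bullet> (t *\<^sub>R h))) (at s)" .
    then show ?thesis
      by (rule has_derivative_imp_has_field_derivative) simp
  qed
  have bnd: "\<bar>(g (x + s *\<^sub>R h) - g x) \<bullet> h\<bar> \<le> L * s * (norm h)\<^sup>2" if "0 \<le> s" for s
  proof -
    have "\<bar>(g (x + s *\<^sub>R h) - g x) \<bullet> h\<bar> \<le> norm (g (x + s *\<^sub>R h) - g x) * norm h"
      by (rule Cauchy_Schwarz_ineq2)
    also have "\<dots> \<le> L * norm (s *\<^sub>R h) * norm h"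
      using l[of "x + s *\<^sub>R h" x] by (intro mult_right_mono) auto
    also have "\<dots> = L * s * (norm h)\<^sup>2" using that by (simp add: power2_eq_square)
    finally show ?thesis .
  qed
  define \<psi> where "\<psi> = (\<lambda>s. f (x + s *\<^sub>R h) - s * (g x \<bullet> h) - L / 2 * s\<^sup>2 * (norm h)\<^sup>2)"
  have "\<psi> 1 \<le> \<psi> 0"
  proof (rule DERIV_nonpos_imp_nonincreasing[of 0 1])
    fix s :: real assume s: "0 \<le> s" "s \<le> 1"
    have "(\<psi> has_real_derivative (g (x + s *\<^sub>R h) \<bullet> h - g x \<bullet> h - L * s * (norm h)\<^sup>2)) (at s)"
      unfolding \<psi>_def by (rule derivative_eq_intros dd refl | simp)+
    moreover have "g (x + s *\<^sub>R h) \<bullet> h - g x \<bullet> h - L * s * (norm h)\<^sup>2 \<le> 0"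
      using bnd[OF s(1)] by (simp add: inner_diff_left)
    ultimately show "\<exists>y. DERIV \<psi> s :> y \<and> y \<le> 0" by blast
  qed simp
  then show "f y \<le> f x + g x \<bullet> (y - x) + L / 2 * (norm (y - x))\<^sup>2"
    unfolding \<psi>_def h_def by simp
  define \<phi> where "\<phi> = (\<lambda>s. f (x + s *\<^sub>R h) - s * (g x \<bullet> h) + L / 2 * s\<^sup>2 * (norm h)\<^sup>2)"
  have "\<phi> 0 \<le> \<phi> 1"
  proof (rule DERIV_nonneg_imp_nondecreasing[of 0 1])
    fix s :: real assume s: "0 \<le> s" "s \<le> 1"
    have "(\<phi> has_real_derivative (g (x + s *\<^sub>R h) \<bullet> h - g x \<bullet> h + L * s * (norm h)\<^sup>2)) (at s)"
      unfolding \<phi>_def by (rule derivative_eq_intros dd refl | simp)+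
    moreover have "g (x + s *\<^sub>R h) \<bullet> h - g x \<bullet> h + L * s * (norm h)\<^sup>2 \<ge> 0"
      using bnd[OF s(1)] by (simp add: inner_diff_left)
    ultimately show "\<exists>y. DERIV \<phi> s :> y \<and> y \<ge> 0" by blast
  qed simp
  then show "f y \<ge> f x + g x \<bullet> (y - x) - L / 2 * (norm (y - x))\<^sup>2"
    unfolding \<phi>_def h_def by simp
qed

lemma final_arith:
  fixes T E L D S Gb \<beta> \<gamma> X :: real
  assumes T: "T \<ge> 1" and E: "E \<ge> 1" and L: "L > 0" and g: "\<gamma> = 1 / (2 * L * sqrt (T * E))"
    and b: "0 < \<beta>" "\<beta> < 1"
    and X: "X \<le> 2 * D / (\<gamma> * (T * E)) + L\<^sup>2 * (3 * \<beta>\<^sup>2 + 3 + 12 * (1 - \<beta>)\<^sup>2) * \<gamma>\<^sup>2 * E\<^sup>2 * Gb\<^sup>2 + L * \<gamma> * S"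
  shows "X \<le> 1 / sqrt T * (4 * L * D / sqrt E + S / (2 * sqrt E))
            + E * Gb\<^sup>2 / T * (4 + (1 - \<beta>)\<^sup>2 + 8 * (1 - 1 / \<beta>)\<^sup>2)"
proof -
  define s where "s = sqrt (T * E)"
  have TE: "T * E \<ge> 1" using T E using mult_mono[OF T E] by simp
  have s0: "s > 0" unfolding s_def using TE by simp
  have s2: "s\<^sup>2 = T * E" unfolding s_def using TE by simp
  have sTE: "sqrt T * sqrt E = s" unfolding s_def by (simp add: real_sqrt_mult)
  have g': "\<gamma> = 1 / (2 * L * s)" using g s_def by simp
  have T0: "T > 0" "E > 0" using T E by auto
  have t1: "2 * D / (\<gamma> * (T * E)) = 1 / sqrt T * (4 * L * D / sqrt E)"
  proof -
    have "2 * D / (\<gamma> * (T * E)) = 4 * L * D / s"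
      unfolding g' s2[symmetric] using s0 L by (simp add: field_simps power2_eq_square)
    also have "\<dots> = 1 / sqrt T * (4 * L * D / sqrt E)"
      using sTE[symmetric] T0 by (simp add: field_simps)
    finally show ?thesis .
  qed
  have t2: "L * \<gamma> * S = 1 / sqrt T * (S / (2 * sqrt E))"
  proof -
    have "L * \<gamma> * S = S / (2 * s)" unfolding g' using L s0 by (simp add: field_simps)
    also have "\<dots> = 1 / sqrt T * (S / (2 * sqrt E))"
      using sTE[symmetric] T0 by (simp add: field_simps)
    finally show ?thesis .
  qed
  have t3: "L\<^sup>2 * (3 * \<beta>\<^sup>2 + 3 + 12 * (1 - \<beta>)\<^sup>2) * \<gamma>\<^sup>2 * E\<^sup>2 * Gb\<^sup>2 = E * Gb\<^sup>2 / T * ((3 * \<beta>\<^sup>2 + 3 + 12 * (1 - \<beta>)\<^sup>2) / 4)"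
  proof -
    have "L\<^sup>2 * \<gamma>\<^sup>2 = 1 / (4 * (T * E))" unfolding g' s2[symmetric] using L s0
      by (simp add: field_simps power2_eq_square)
    have "L\<^sup>2 * (3 * \<beta>\<^sup>2 + 3 + 12 * (1 - \<beta>)\<^sup>2) * \<gamma>\<^sup>2 * E\<^sup>2 * Gb\<^sup>2 = (L\<^sup>2 * \<gamma>\<^sup>2) * ((3 * \<beta>\<^sup>2 + 3 + 12 * (1 - \<beta>)\<^sup>2) * E\<^sup>2 * Gb\<^sup>2)"
      by (simp only: mult_ac)
    also have "\<dots> = (3 * \<beta>\<^sup>2 + 3 + 12 * (1 - \<beta>)\<^sup>2) * E\<^sup>2 * Gb\<^sup>2 / (4 * (T * E))"
      unfolding \<open>L\<^sup>2 * \<gamma>\<^sup>2 = 1 / (4 * (T * E))\<close> by simp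
    also have "\<dots> = E * Gb\<^sup>2 / T * ((3 * \<beta>\<^sup>2 + 3 + 12 * (1 - \<beta>)\<^sup>2) / 4)"
      using T0 by (simp add: field_simps power2_eq_square)
    finally show ?thesis .
  qed
  have c: "(3 * \<beta>\<^sup>2 + 3 + 12 * (1 - \<beta>)\<^sup>2) / 4 \<le> 4 + (1 - \<beta>)\<^sup>2 + 8 * (1 - 1 / \<beta>)\<^sup>2"
  proof -
    have b2: "\<beta>\<^sup>2 \<le> 1" using b by (simp add: abs_square_le_1)
    have "(1 - 1 / \<beta>)\<^sup>2 = (1 - \<beta>)\<^sup>2 / \<beta>\<^sup>2" using b by (simp add: field_simps power2_eq_square)
    also have "\<dots> \<ge> (1 - \<beta>)\<^sup>2" using b b2 by (simp add: le_divide_eq)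
    finally have "(1 - \<beta>)\<^sup>2 \<le> (1 - 1 / \<beta>)\<^sup>2" .
    moreover have "0 \<le> (1 - \<beta>)\<^sup>2" by simp
    moreover have "(3 * bb + 3 + 12 * a) / 4 \<le> 4 + a + 8 * q" if "a \<le> q" "0 \<le> a" "bb \<le> 1" for a bb q :: real
    proof -
      have "(3 * bb + 3 + 12 * a) / 4 = 3 / 4 * bb + 3 / 4 + 3 * a" by simp
      then show ?thesis using that by linarith
    qed
    ultimately show ?thesis using b2 by blast
  qed
  have nn: "0 \<le> E * Gb\<^sup>2 / T" using T0 by simp
  have "E * Gb\<^sup>2 / T * ((3 * \<beta>\<^sup>2 + 3 + 12 * (1 - \<beta>)\<^sup>2) / 4) \<le> E * Gb\<^sup>2 / T * (4 + (1 - \<beta>)\<^sup>2 + 8 * (1 - 1 / \<beta>)\<^sup>2)"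
    using mult_left_mono[OF c nn] .
  moreover have "1 / sqrt T * (4 * L * D / sqrt E + S / (2 * sqrt E)) = 1 / sqrt T * (4 * L * D / sqrt E) + 1 / sqrt T * (S / (2 * sqrt E))"
    by (rule distrib_left)
  ultimately show ?thesis using X t1 t2 t3 by linarith
qed

locale fl =
  fixes M :: "'a measure" and X :: "'x measure"
    and C E T :: nat and p :: "nat \<Rightarrow> nat \<Rightarrow> real"
    and F :: "nat \<Rightarrow> 'v::euclidean_space \<Rightarrow> real" and gradF :: "nat \<Rightarrow> 'v \<Rightarrow> 'v"
    and G :: "nat \<Rightarrow> 'v \<Rightarrow> 'x \<Rightarrow> 'v" and xi :: "nat \<Rightarrow> nat \<Rightarrow> nat \<Rightarrow> 'a \<Rightarrow> 'x"
    and w0 :: 'v and \<beta> \<gamma> L \<sigma> Gb finf :: real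
  assumes M: "prob_space M"
    and p_nonneg: "\<And>i n. i < C \<Longrightarrow> n < C \<Longrightarrow> p i n \<ge> 0"
    and p_sym: "\<And>i n. i < C \<Longrightarrow> n < C \<Longrightarrow> p i n = p n i"
    and p_diag: "\<And>i. i < C \<Longrightarrow> p i i = 0"
    and p_sum: "(\<Sum>i<C. \<Sum>n<C. p i n) = 1"
    and p_pos: "\<And>i. i < C \<Longrightarrow> pw p C i > 0"
    and \<beta>: "0 < \<beta>" "\<beta> < 1"
    and E: "E \<ge> 1" and T: "T \<ge> 1"
    and L: "L > 0"
    and \<gamma>: "\<gamma> = 1 / (2 * L * sqrt (real T * real E))"
    and grad: "\<And>i x. i < C \<Longrightarrow> (F i has_derivative (\<lambda>h. gradF i x \<bullet> h)) (at x)"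
    and smooth: "\<And>i x y. i < C \<Longrightarrow> norm (gradF i x - gradF i y) \<le> L * norm (x - y)"
    and lower: "\<And>x. (\<Sum>i<C. pw p C i * F i x) \<ge> finf"
    and xi_meas: "\<And>i t k. i < C \<Longrightarrow> t < T \<Longrightarrow> k < E \<Longrightarrow> xi i t k \<in> M \<rightarrow>\<^sub>M X"
    and xi_indep: "prob_space.indep_vars M (\<lambda>_. X) (\<lambda>(i, t, k). xi i t k)
                     ({..<C} \<times> {..<T} \<times> {..<E})"
    and G_meas: "\<And>i. i < C \<Longrightarrow> (\<lambda>(w, x). G i w x) \<in> borel \<Otimes>\<^sub>M X \<rightarrow>\<^sub>M borel"
    and unbiased: "\<And>i t k w. i < C \<Longrightarrow> t < T \<Longrightarrow> k < E \<Longrightarrow>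
        integrable M (\<lambda>\<omega>. G i w (xi i t k \<omega>)) \<and>
        (\<integral>\<omega>. G i w (xi i t k \<omega>) \<partial>M) = gradF i w"
    and variance: "\<And>i t k. i < C \<Longrightarrow> t < T \<Longrightarrow> k < E \<Longrightarrow>
        (let wt = (\<lambda>\<omega>. pert_iter C p \<beta> \<gamma> E G w0 (\<lambda>i t k. xi i t k \<omega>) t i k)
         in integrable M (\<lambda>\<omega>. (norm (G i (wt \<omega>) (xi i t k \<omega>) - gradF i (wt \<omega>)))\<^sup>2) \<and>
            (\<integral>\<omega>. (norm (G i (wt \<omega>) (xi i t k \<omega>) - gradF i (wt \<omega>)))\<^sup>2 \<partial>M) \<le> \<sigma>\<^sup>2)"
    and gnorm: "\<And>i t k. i < C \<Longrightarrow> t < T \<Longrightarrow> k < E \<Longrightarrow>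
        (let wt = (\<lambda>\<omega>. pert_iter C p \<beta> \<gamma> E G w0 (\<lambda>i t k. xi i t k \<omega>) t i k)
         in integrable M (\<lambda>\<omega>. (norm (G i (wt \<omega>) (xi i t k \<omega>)))\<^sup>2) \<and>
            (\<integral>\<omega>. (norm (G i (wt \<omega>) (xi i t k \<omega>)))\<^sup>2 \<partial>M) \<le> Gb\<^sup>2)"
begin

sublocale prob_space M by (rule M)

definition "P i = pw p C i"
definition "xw \<omega> = (\<lambda>i t k. xi i t k \<omega>)"
definition "W t i k \<omega> = client_iter C p \<beta> \<gamma> E G w0 (xw \<omega>) t i k"
definition "U t i \<omega> = anchor C p \<beta> \<gamma> E G w0 (xw \<omega>) t i"
definition "Wt t i k \<omega> = pert_iter C p \<beta> \<gamma> E G w0 (xw \<omega>) t i k"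
definition "Wb t k \<omega> = avg_iter C p \<beta> \<gamma> E G w0 (xw \<omega>) t k"
definition "sg i t k \<omega> = G i (Wt t i k \<omega>) (xi i t k \<omega>)"
definition "Fb x = (\<Sum>i<C. P i * F i x)"
definition "gF x = (\<Sum>i<C. P i *\<^sub>R gradF i x)"
definition "L2 f \<longleftrightarrow> f \<in> borel_measurable M \<and> integrable M (\<lambda>\<omega>. (norm (f \<omega> :: 'v))\<^sup>2)"

lemma P_nonneg: "i < C \<Longrightarrow> P i \<ge> 0" using p_pos[of i] by (simp add: P_def)
lemma P_sum: "(\<Sum>i<C. P i) = 1" using p_sum by (simp add: P_def pw_def)
lemma P_pw: "P i = (\<Sum>n<C. p i n)" by (simp add: P_def pw_def)
lemma P_col: "i < C \<Longrightarrow> (\<Sum>n<C. p n i) = P i"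
  unfolding P_pw by (intro sum.cong) (auto simp: p_sym)

lemma Fb_deriv: "(Fb has_derivative (\<lambda>h. gF x \<bullet> h)) (at x)"
proof -
  have "(Fb has_derivative (\<lambda>h. \<Sum>i<C. P i * (gradF i x \<bullet> h))) (at x)"
    unfolding Fb_def by (intro has_derivative_sum has_derivative_mult_right grad) auto
  then show ?thesis
    by (simp add: gF_def inner_sum_left)
qed

lemma gF_lip: "norm (gF x - gF y) \<le> L * norm (x - y)"
proof -
  have "norm (gF x - gF y) = norm (\<Sum>i<C. P i *\<^sub>R (gradF i x - gradF i y))"
    by (simp add: gF_def sum_subtractf scaleR_diff_right)
  also have "\<dots> \<le> (\<Sum>i<C. norm (P i *\<^sub>R (gradF i x - gradF i y)))" by (rule norm_sum)
  also have "\<dots> \<le> (\<Sum>i<C. P i * (L * norm (x - y)))"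
    using P_nonneg smooth by (intro sum_mono) (auto intro: mult_left_mono)
  also have "\<dots> = L * norm (x - y)" by (simp add: sum_distrib_right[symmetric] P_sum)
  finally show ?thesis .
qed

lemmas Fb_upper = descent(1)[OF Fb_deriv gF_lip]
lemmas Fb_lower = descent(2)[OF Fb_deriv gF_lip]

lemma int_bound:
  fixes g :: "'a \<Rightarrow> real"
  assumes "integrable M f" "g \<in> borel_measurable M" "\<And>\<omega>. \<omega> \<in> space M \<Longrightarrow> \<bar>g \<omega>\<bar> \<le> f \<omega>"
  shows "integrable M g"
proof (rule Bochner_Integration.integrable_bound[OF assms(1,2)])
  show "AE \<omega> in M. norm (g \<omega>) \<le> norm (f \<omega>)"
    using assms(3) by (intro AE_I2) (metis abs_ge_self order_trans real_norm_def)
qed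

lemma L2_meas: "L2 f \<Longrightarrow> f \<in> borel_measurable M" by (simp add: L2_def)
lemma L2_int: "L2 f \<Longrightarrow> integrable M (\<lambda>\<omega>. (norm (f \<omega>))\<^sup>2)" by (simp add: L2_def)

lemma L2_const[simp, intro]: "L2 (\<lambda>_. c)" by (simp add: L2_def)

lemma sq_add_le: "(norm (a + b :: 'v))\<^sup>2 \<le> 2 * (norm a)\<^sup>2 + 2 * (norm b)\<^sup>2"
proof -
  have "(norm (a + b))\<^sup>2 \<le> (norm a + norm b)\<^sup>2"
    by (intro power_mono norm_triangle_ineq) auto
  also have "\<dots> \<le> 2 * (norm a)\<^sup>2 + 2 * (norm b)\<^sup>2" by (rule sq2)
  finally show ?thesis .
qed

lemma L2_add[intro]: "L2 f \<Longrightarrow> L2 g \<Longrightarrow> L2 (\<lambda>\<omega>. f \<omega> + g \<omega>)"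
  unfolding L2_def
  apply (intro conjI borel_measurable_add, simp, simp)
  apply (rule int_bound[of "\<lambda>\<omega>. 2 * (norm (f \<omega>))\<^sup>2 + 2 * (norm (g \<omega>))\<^sup>2"])
  using sq_add_le by auto

lemma L2_scaleR[intro]: "L2 f \<Longrightarrow> L2 (\<lambda>\<omega>. c *\<^sub>R f \<omega>)"
  unfolding L2_def by (auto simp: power_mult_distrib)

lemma L2_uminus[intro]: "L2 f \<Longrightarrow> L2 (\<lambda>\<omega>. - f \<omega>)"
  using L2_scaleR[of f "-1"] by simp

lemma L2_diff[intro]: "L2 f \<Longrightarrow> L2 g \<Longrightarrow> L2 (\<lambda>\<omega>. f \<omega> - g \<omega>)"
  using L2_add[of f "\<lambda>\<omega>. - g \<omega>"] by auto

lemma L2_sum[intro]: "(\<And>i. i \<in> A \<Longrightarrow> L2 (f i)) \<Longrightarrow> L2 (\<lambda>\<omega>. \<Sum>i\<in>A. f i \<omega>)"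
proof (induction A rule: infinite_finite_induct)
  case (insert x F)
  then show ?case using L2_add[of "f x" "\<lambda>\<omega>. \<Sum>i\<in>F. f i \<omega>"] by simp
qed auto

lemma L2_inner: "L2 f \<Longrightarrow> L2 g \<Longrightarrow> integrable M (\<lambda>\<omega>. f \<omega> \<bullet> g \<omega>)"
proof -
  assume f: "L2 f" and g: "L2 g"
  show ?thesis
  proof (rule int_bound[of "\<lambda>\<omega>. (norm (f \<omega>))\<^sup>2 + (norm (g \<omega>))\<^sup>2"])
    show "integrable M (\<lambda>\<omega>. (norm (f \<omega>))\<^sup>2 + (norm (g \<omega>))\<^sup>2)" using f g by (auto simp: L2_def)
    show "(\<lambda>\<omega>. f \<omega> \<bullet> g \<omega>) \<in> borel_measurable M" using f g by (auto simp: L2_def)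
    fix \<omega>
    have "\<bar>f \<omega> \<bullet> g \<omega>\<bar> \<le> norm (f \<omega>) * norm (g \<omega>)" by (rule Cauchy_Schwarz_ineq2)
    also have "\<dots> \<le> (norm (f \<omega>))\<^sup>2 + (norm (g \<omega>))\<^sup>2" by (rule ab_le)
    finally show "\<bar>f \<omega> \<bullet> g \<omega>\<bar> \<le> (norm (f \<omega>))\<^sup>2 + (norm (g \<omega>))\<^sup>2" .
  qed
qed

lemma L2_norm_int: "L2 f \<Longrightarrow> integrable M (\<lambda>\<omega>. (norm (f \<omega>))\<^sup>2)" by (simp add: L2_def)

lemma lip_L2:
  fixes h :: "'v \<Rightarrow> 'v"
  assumes lip: "\<And>x y. norm (h x - h y) \<le> L * norm (x - y)" and f: "L2 f"
  shows "L2 (\<lambda>\<omega>. h (f \<omega>))"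
proof -
  have "L-lipschitz_on UNIV h"
  proof (rule lipschitz_onI)
    fix x y :: 'v show "dist (h x) (h y) \<le> L * dist x y" using lip[of x y] by (simp only: dist_norm)
  next
    show "0 \<le> L" using L by simp
  qed
  then have cont: "continuous_on UNIV h" by (rule lipschitz_on_continuous_on)
  have m: "(\<lambda>\<omega>. h (f \<omega>)) \<in> borel_measurable M"
    using borel_measurable_continuous_on[OF cont L2_meas[OF f]] .
  have b: "(norm (h (f \<omega>)))\<^sup>2 \<le> 2 * (norm (h 0))\<^sup>2 + 2 * L\<^sup>2 * (norm (f \<omega>))\<^sup>2" for \<omega>
  proof -
    have "(norm (h (f \<omega>)))\<^sup>2 = (norm (h 0 + (h (f \<omega>) - h 0)))\<^sup>2" by simp
    also have "\<dots> \<le> 2 * (norm (h 0))\<^sup>2 + 2 * (norm (h (f \<omega>) - h 0))\<^sup>2" by (rule sq_add_le)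
    also have "(norm (h (f \<omega>) - h 0))\<^sup>2 \<le> (L * norm (f \<omega>))\<^sup>2"
      using lip[of "f \<omega>" 0] by (intro power_mono) auto
    finally show ?thesis by (simp add: power_mult_distrib)
  qed
  have i: "integrable M (\<lambda>\<omega>. 2 * (norm (h 0))\<^sup>2 + 2 * L\<^sup>2 * (norm (f \<omega>))\<^sup>2)"
    using L2_int[OF f] by simp
  have "integrable M (\<lambda>\<omega>. (norm (h (f \<omega>)))\<^sup>2)"
  proof (rule int_bound[OF i])
    show "(\<lambda>\<omega>. (norm (h (f \<omega>)))\<^sup>2) \<in> borel_measurable M" using m by simp
    fix \<omega> show "\<bar>(norm (h (f \<omega>)))\<^sup>2\<bar> \<le> 2 * (norm (h 0))\<^sup>2 + 2 * L\<^sup>2 * (norm (f \<omega>))\<^sup>2"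
      using b[of \<omega>] by simp
  qed
  then show ?thesis using m by (simp add: L2_def)
qed

lemma L2_gradF: "i < C \<Longrightarrow> L2 f \<Longrightarrow> L2 (\<lambda>\<omega>. gradF i (f \<omega>))"
  using lip_L2[OF smooth] by blast

lemma L2_gF: "L2 f \<Longrightarrow> L2 (\<lambda>\<omega>. gF (f \<omega>))"
  using lip_L2[OF gF_lip] by blast

lemma Fb_int: "L2 f \<Longrightarrow> integrable M (\<lambda>\<omega>. Fb (f \<omega>))"
proof -
  assume f: "L2 f"
  have cont: "continuous_on UNIV Fb"
    using Fb_deriv by (intro continuous_at_imp_continuous_on ballI has_derivative_continuous) blast
  have m: "(\<lambda>\<omega>. Fb (f \<omega>)) \<in> borel_measurable M"
    using borel_measurable_continuous_on[OF cont L2_meas[OF f]] .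
  have b: "\<bar>Fb y\<bar> \<le> \<bar>Fb 0\<bar> + (norm (gF 0))\<^sup>2 + (1 + L) * (norm y)\<^sup>2" for y
  proof -
    have u: "Fb y \<le> Fb 0 + gF 0 \<bullet> y + L / 2 * (norm y)\<^sup>2" using Fb_upper[of y 0] by simp
    have l: "Fb y \<ge> Fb 0 + gF 0 \<bullet> y - L / 2 * (norm y)\<^sup>2" using Fb_lower[of 0 y] by simp
    have cs: "\<bar>gF 0 \<bullet> y\<bar> \<le> (norm (gF 0))\<^sup>2 + (norm y)\<^sup>2"
      using Cauchy_Schwarz_ineq2[of "gF 0" y] ab_le[of "norm (gF 0)" "norm y"] by linarith
    have "0 \<le> L / 2 * (norm y)\<^sup>2" using L by simp
    moreover have "L / 2 * (norm y)\<^sup>2 \<le> L * (norm y)\<^sup>2" using L by simp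
    moreover have "0 \<le> (norm y)\<^sup>2" by simp
    ultimately show ?thesis using u l cs unfolding distrib_right by linarith
  qed
  show ?thesis
    by (rule int_bound[of "\<lambda>\<omega>. \<bar>Fb 0\<bar> + (norm (gF 0))\<^sup>2 + (1 + L) * (norm (f \<omega>))\<^sup>2"])
       (use L2_int[OF f] m b in auto)
qed

end

context fl begin

definition "ST t \<omega> = (if t = 0 then w0 else (\<Sum>n<C. P n *\<^sub>R W (t - 1) n E \<omega>))"

lemma Wt_eq: "Wt t i k \<omega> = \<beta> *\<^sub>R W t i k \<omega> + (1 - \<beta>) *\<^sub>R U t i \<omega>"
  by (simp add: Wt_def W_def U_def pert_iter_def)

lemma W_Suc: "W t i (Suc k) \<omega> = W t i k \<omega> - \<gamma> *\<^sub>R sg i t k \<omega>"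
  by (simp add: W_def ci_Suc sg_def Wt_def xw_def)

lemma W_0: "W t i 0 \<omega> = ST t \<omega>"
  by (simp add: W_def ST_def ci_0 P_def)

lemma W_expand: "W t i k \<omega> = ST t \<omega> - \<gamma> *\<^sub>R (\<Sum>s<k. sg i t s \<omega>)"
  by (induction k) (simp_all add: W_0 W_Suc scaleR_add_right algebra_simps)

lemma Wb_eq: "Wb t k \<omega> = (\<Sum>i<C. P i *\<^sub>R W t i k \<omega>)"
  by (simp add: Wb_def avg_iter_def W_def P_def)

lemma sum_P_const: "(\<Sum>i<C. P i *\<^sub>R (v::'v)) = v"
  using scaleR_sum_left[of P "{..<C}" v] P_sum by simp

lemma Wb_expand: "Wb t k \<omega> = ST t \<omega> - \<gamma> *\<^sub>R (\<Sum>i<C. P i *\<^sub>R (\<Sum>s<k. sg i t s \<omega>))"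
  unfolding Wb_eq W_expand
  by (simp add: scaleR_diff_right sum_subtractf sum_P_const scaleR_sum_right mult.commute)

lemma Wb_Suc: "Wb t (Suc k) \<omega> = Wb t k \<omega> - \<gamma> *\<^sub>R (\<Sum>i<C. P i *\<^sub>R sg i t k \<omega>)"
  unfolding Wb_eq W_Suc
  by (simp add: scaleR_diff_right sum_subtractf scaleR_sum_right mult.commute)

lemma Wb_round: "Wb (Suc t) 0 \<omega> = Wb t E \<omega>"
  unfolding Wb_eq W_0 by (simp add: sum_P_const ST_def)

lemma U_Suc: "U (Suc t) i \<omega> = (1 / P i) *\<^sub>R (\<Sum>n<C. p i n *\<^sub>R W t n E \<omega>)"
  by (simp add: U_def anchor_Suc W_def P_def)

lemma U_0: "U 0 i \<omega> = w0" by (simp add: U_def anchor_def)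

lemma gnorm': "i < C \<Longrightarrow> t < T \<Longrightarrow> k < E \<Longrightarrow>
   integrable M (\<lambda>\<omega>. (norm (sg i t k \<omega>))\<^sup>2) \<and> (\<integral>\<omega>. (norm (sg i t k \<omega>))\<^sup>2 \<partial>M) \<le> Gb\<^sup>2"
  using gnorm[of i t k] by (simp add: Let_def sg_def Wt_def xw_def)

lemma variance': "i < C \<Longrightarrow> t < T \<Longrightarrow> k < E \<Longrightarrow>
   integrable M (\<lambda>\<omega>. (norm (sg i t k \<omega> - gradF i (Wt t i k \<omega>)))\<^sup>2) \<and>
   (\<integral>\<omega>. (norm (sg i t k \<omega> - gradF i (Wt t i k \<omega>)))\<^sup>2 \<partial>M) \<le> \<sigma>\<^sup>2"
  using variance[of i t k] by (simp add: Let_def sg_def Wt_def xw_def)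

lemma U_0': "U 0 i = (\<lambda>_. w0)" by (rule ext) (simp add: U_0)

lemma sg_L2: "i < C \<Longrightarrow> t < T \<Longrightarrow> k < E \<Longrightarrow> L2 (Wt t i k) \<Longrightarrow> L2 (sg i t k)"
  unfolding L2_def
proof (intro conjI)
  assume a: "i < C" "t < T" "k < E" "Wt t i k \<in> borel_measurable M \<and> integrable M (\<lambda>\<omega>. (norm (Wt t i k \<omega>))\<^sup>2)"
  show "sg i t k \<in> borel_measurable M"
    unfolding sg_def[abs_def] using G_comp_meas[OF G_meas[OF a(1)], of "Wt t i k" M "xi i t k"] a xi_meas by auto
  show "integrable M (\<lambda>\<omega>. (norm (sg i t k \<omega>))\<^sup>2)" using gnorm' a by blast
qed

lemma round_L2:
  assumes t: "t < T" and S: "L2 (ST t)" and U: "\<And>i. i < C \<Longrightarrow> L2 (U t i)" and i: "i < C"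
  shows "(\<forall>k\<le>E. L2 (W t i k)) \<and> (\<forall>k<E. L2 (sg i t k) \<and> L2 (Wt t i k))"
proof -
  have "L2 (W t i k) \<and> (\<forall>s<k. L2 (sg i t s) \<and> L2 (Wt t i s))" if "k \<le> E" for k
    using that
  proof (induction k)
    case 0
    have "W t i 0 = ST t" by (rule ext) (simp add: W_0)
    then show ?case using S by simp
  next
    case (Suc k)
    then have IH: "L2 (W t i k)" "\<forall>s<k. L2 (sg i t s) \<and> L2 (Wt t i s)" by auto
    have wt: "L2 (Wt t i k)"
    proof -
      have "Wt t i k = (\<lambda>\<omega>. \<beta> *\<^sub>R W t i k \<omega> + (1 - \<beta>) *\<^sub>R U t i \<omega>)" by (rule ext) (simp add: Wt_eq)
      then show ?thesis using IH U[OF i] by auto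
    qed
    have sgk: "L2 (sg i t k)" using sg_L2[OF i t _ wt] Suc.prems by simp
    have "W t i (Suc k) = (\<lambda>\<omega>. W t i k \<omega> - \<gamma> *\<^sub>R sg i t k \<omega>)" by (rule ext) (simp add: W_Suc)
    then have "L2 (W t i (Suc k))" using IH sgk by auto
    moreover have "\<forall>s<Suc k. L2 (sg i t s) \<and> L2 (Wt t i s)" using IH sgk wt less_Suc_eq by auto
    ultimately show ?case by blast
  qed
  then show ?thesis by auto
qed

lemma L2_all:
  assumes "t < T"
  shows "L2 (ST t) \<and> (\<forall>i<C. L2 (U t i)) \<and> (\<forall>i<C. \<forall>k\<le>E. L2 (W t i k)) \<and> (\<forall>i<C. \<forall>k<E. L2 (sg i t k) \<and> L2 (Wt t i k))"
  using assms
proof (induction t)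
  case 0
  have U: "\<forall>i<C. L2 (U 0 i)" by (simp add: U_0')
  have "ST 0 = (\<lambda>_. w0)" by (rule ext) (simp add: ST_def)
  then have S: "L2 (ST 0)" by simp
  have R: "\<And>i. i < C \<Longrightarrow> (\<forall>k\<le>E. L2 (W 0 i k)) \<and> (\<forall>k<E. L2 (sg i 0 k) \<and> L2 (Wt 0 i k))"
  proof -
    fix i assume "i < C" then show "?thesis i" using round_L2[OF "0.prems" S, of i] U by simp
  qed
  show ?case using R U S by blast
next
  case (Suc t)
  then have IH: "\<forall>i<C. \<forall>k\<le>E. L2 (W t i k)" by auto
  have S: "L2 (ST (Suc t))"
  proof -
    have "ST (Suc t) = (\<lambda>\<omega>. \<Sum>n<C. P n *\<^sub>R W t n E \<omega>)" by (rule ext) (simp add: ST_def)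
    moreover have "L2 (\<lambda>\<omega>. \<Sum>n<C. P n *\<^sub>R W t n E \<omega>)"
    proof (intro L2_sum L2_scaleR)
      fix n assume "n \<in> {..<C}" then show "L2 (W t n E)" using IH by simp
    qed
    ultimately show ?thesis by simp
  qed
  have U: "\<forall>i<C. L2 (U (Suc t) i)"
  proof (intro allI impI)
    fix i
    have "U (Suc t) i = (\<lambda>\<omega>. (1 / P i) *\<^sub>R (\<Sum>n<C. p i n *\<^sub>R W t n E \<omega>))" by (rule ext) (simp add: U_Suc)
    moreover have "L2 (\<lambda>\<omega>. (1 / P i) *\<^sub>R (\<Sum>n<C. p i n *\<^sub>R W t n E \<omega>))"
    proof (intro L2_sum L2_scaleR)
      fix n assume "n \<in> {..<C}" then show "L2 (W t n E)" using IH by simp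
    qed
    ultimately show "L2 (U (Suc t) i)" by simp
  qed
  have R: "\<And>i. i < C \<Longrightarrow> (\<forall>k\<le>E. L2 (W (Suc t) i k)) \<and> (\<forall>k<E. L2 (sg i (Suc t) k) \<and> L2 (Wt (Suc t) i k))"
  proof -
    fix i assume "i < C" then show "?thesis i" using round_L2[OF Suc.prems S, of i] U by simp
  qed
  show ?case using R U S by blast
qed

end

context fl begin

definition "II = {..<C} \<times> {..<T} \<times> {..<E}"
definition "Y = (\<lambda>(i, t, k). xi i t k)"
definition "past t k = {(i', t', k'). i' < C \<and> (t' < t \<and> k' < E \<or> t' = t \<and> k' < k)}"
definition "\<Phi> z = (\<lambda>i t k. z (i, t, k))"
definition "Zr J \<omega> = restrict (\<lambda>j. Y j \<omega>) J"

lemma Y_app[simp]: "Y (i, t, k) \<omega> = xi i t k \<omega>" by (simp add: Y_def)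

lemma past_sub: "t < T \<Longrightarrow> k \<le> E \<Longrightarrow> past t k \<subseteq> II"
  by (auto simp: past_def II_def)

lemma rep:
  assumes "past t k \<subseteq> J" "i < C"
  shows "client_iter C p \<beta> \<gamma> E G w0 (\<Phi> (Zr J \<omega>)) t i k = W t i k \<omega>"
    and "anchor C p \<beta> \<gamma> E G w0 (\<Phi> (Zr J \<omega>)) t i = U t i \<omega>"
    and "pert_iter C p \<beta> \<gamma> E G w0 (\<Phi> (Zr J \<omega>)) t i k = Wt t i k \<omega>"
proof -
  have H: "\<And>i' t' k'. i' < C \<Longrightarrow> (t' < t \<and> k' < E \<or> t' = t \<and> k' < k) \<Longrightarrow> \<Phi> (Zr J \<omega>) i' t' k' = xw \<omega> i' t' k'"
    using assms(1) by (auto simp: \<Phi>_def Zr_def xw_def past_def)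
  from ci_cong[where xa = "\<Phi> (Zr J \<omega>)" and xb = "xw \<omega>" and C = C and t = t and E = E and k = k
    and p = p and \<beta> = \<beta> and \<gamma> = \<gamma> and G = G, OF H assms(2)]
  show "client_iter C p \<beta> \<gamma> E G w0 (\<Phi> (Zr J \<omega>)) t i k = W t i k \<omega>"
    and "anchor C p \<beta> \<gamma> E G w0 (\<Phi> (Zr J \<omega>)) t i = U t i \<omega>"
    by (auto simp: W_def U_def)
  then show "pert_iter C p \<beta> \<gamma> E G w0 (\<Phi> (Zr J \<omega>)) t i k = Wt t i k \<omega>"
    by (simp add: pert_iter_def Wt_eq)
qed

lemma meas_rep:
  assumes "past t k \<subseteq> J" "i < C"
  shows "(\<lambda>z. client_iter C p \<beta> \<gamma> E G w0 (\<Phi> z) t i k) \<in> borel_measurable (PiM J (\<lambda>_. X))"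
    and "(\<lambda>z. anchor C p \<beta> \<gamma> E G w0 (\<Phi> z) t i) \<in> borel_measurable (PiM J (\<lambda>_. X))"
    and "(\<lambda>z. pert_iter C p \<beta> \<gamma> E G w0 (\<Phi> z) t i k) \<in> borel_measurable (PiM J (\<lambda>_. X))"
proof -
  have H: "\<And>i' t' k'. i' < C \<Longrightarrow> (t' < t \<and> k' < E \<or> t' = t \<and> k' < k) \<Longrightarrow> (\<lambda>z. \<Phi> z i' t' k') \<in> PiM J (\<lambda>_. X) \<rightarrow>\<^sub>M X"
    using assms(1) unfolding \<Phi>_def by (intro measurable_component_singleton) (auto simp: past_def)
  from ci_meas[where \<Phi> = \<Phi> and N = "PiM J (\<lambda>_. X)", OF G_meas H assms(2)]
  show "(\<lambda>z. client_iter C p \<beta> \<gamma> E G w0 (\<Phi> z) t i k) \<in> borel_measurable (PiM J (\<lambda>_. X))"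
    and "(\<lambda>z. anchor C p \<beta> \<gamma> E G w0 (\<Phi> z) t i) \<in> borel_measurable (PiM J (\<lambda>_. X))"
    by auto
  then show "(\<lambda>z. pert_iter C p \<beta> \<gamma> E G w0 (\<Phi> z) t i k) \<in> borel_measurable (PiM J (\<lambda>_. X))"
    unfolding pert_iter_def by (intro borel_measurable_add borel_measurable_scaleR) auto
qed

lemma fresh:
  assumes t: "t < T" and k: "k < E" and i0: "i0 < C" and JI: "J \<subseteq> II" and pJ: "past t k \<subseteq> J"
    and nJ: "(i0, t, k) \<notin> J"
    and Am: "A \<in> borel_measurable (PiM J (\<lambda>_. X))"
    and a: "\<And>\<omega>. \<omega> \<in> space M \<Longrightarrow> a \<omega> = A (Zr J \<omega>)"
    and aL2: "L2 a"
  shows "(\<integral>\<omega>. a \<omega> \<bullet> sg i0 t k \<omega> \<partial>M) = (\<integral>\<omega>. a \<omega> \<bullet> gradF i0 (Wt t i0 k \<omega>) \<partial>M)"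
proof -
  define h where "h = (\<lambda>(z, x). A z \<bullet> G i0 (pert_iter C p \<beta> \<gamma> E G w0 (\<Phi> z) t i0 k) x)"
  have j0: "(i0, t, k) \<in> II" using t k i0 by (simp add: II_def)
  have sgL2: "L2 (sg i0 t k)" using L2_all[OF t] i0 k by blast
  have hm: "h \<in> borel_measurable (PiM J (\<lambda>_. X) \<Otimes>\<^sub>M X)"
  proof -
    have pm: "(\<lambda>zx. pert_iter C p \<beta> \<gamma> E G w0 (\<Phi> (fst zx)) t i0 k) \<in> borel_measurable (PiM J (\<lambda>_. X) \<Otimes>\<^sub>M X)"
      using measurable_fst''[OF meas_rep(3)[OF pJ i0], of X] by simp
    have gm: "(\<lambda>zx. G i0 (pert_iter C p \<beta> \<gamma> E G w0 (\<Phi> (fst zx)) t i0 k) (snd zx)) \<in> borel_measurable (PiM J (\<lambda>_. X) \<Otimes>\<^sub>M X)"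
      by (rule G_comp_meas[OF G_meas[OF i0] pm]) simp
    have am: "(\<lambda>zx. A (fst zx)) \<in> borel_measurable (PiM J (\<lambda>_. X) \<Otimes>\<^sub>M X)"
      using measurable_fst''[OF Am, of X] by simp
    have "h = (\<lambda>zx. A (fst zx) \<bullet> G i0 (pert_iter C p \<beta> \<gamma> E G w0 (\<Phi> (fst zx)) t i0 k) (snd zx))"
      by (simp add: h_def case_prod_beta')
    then show ?thesis using am gm by (simp add: borel_measurable_inner)
  qed
  have hrep: "h (Zr J \<omega>, xi i0 t k \<omega>) = a \<omega> \<bullet> sg i0 t k \<omega>" if "\<omega> \<in> space M" for \<omega>
    using that a rep(3)[OF pJ i0] by (simp add: h_def sg_def)
  have hi: "integrable M (\<lambda>\<omega>. h (Zr J \<omega>, xi i0 t k \<omega>))"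
  proof (subst Bochner_Integration.integrable_cong[OF refl])
    show "integrable M (\<lambda>\<omega>. a \<omega> \<bullet> sg i0 t k \<omega>)" using L2_inner[OF aL2 sgL2] .
  qed (rule hrep)
  have "(\<integral>\<omega>. a \<omega> \<bullet> sg i0 t k \<omega> \<partial>M) = (\<integral>\<omega>. h (Zr J \<omega>, Y (i0, t, k) \<omega>) \<partial>M)"
    by (rule Bochner_Integration.integral_cong) (auto simp: hrep)
  also have "\<dots> = (\<integral>\<omega>. (\<integral>\<omega>'. h (Zr J \<omega>, Y (i0, t, k) \<omega>') \<partial>M) \<partial>M)"
    using indep_fresh_integral[OF xi_indep[folded Y_def II_def] JI j0 nJ hm] hi unfolding Zr_def by simp
  also have "\<dots> = (\<integral>\<omega>. a \<omega> \<bullet> gradF i0 (Wt t i0 k \<omega>) \<partial>M)"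
  proof (rule Bochner_Integration.integral_cong[OF refl])
    fix \<omega> assume \<omega>: "\<omega> \<in> space M"
    have "(\<integral>\<omega>'. h (Zr J \<omega>, Y (i0, t, k) \<omega>') \<partial>M) = (\<integral>\<omega>'. a \<omega> \<bullet> G i0 (Wt t i0 k \<omega>) (xi i0 t k \<omega>') \<partial>M)"
      using a[OF \<omega>] rep(3)[OF pJ i0] by (simp add: h_def)
    also have "\<dots> = a \<omega> \<bullet> (\<integral>\<omega>'. G i0 (Wt t i0 k \<omega>) (xi i0 t k \<omega>') \<partial>M)"
      using unbiased[OF i0 t k] by simp
    also have "\<dots> = a \<omega> \<bullet> gradF i0 (Wt t i0 k \<omega>)"
      using unbiased[OF i0 t k] by simp
    finally show "(\<integral>\<omega>'. h (Zr J \<omega>, Y (i0, t, k) \<omega>') \<partial>M) = a \<omega> \<bullet> gradF i0 (Wt t i0 k \<omega>)" .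
  qed
  finally show ?thesis .
qed

end

context fl begin

lemma lip_cont: "(\<And>x y. norm (h x - h y) \<le> L * norm (x - y)) \<Longrightarrow> continuous_on UNIV (h :: 'v \<Rightarrow> 'v)"
proof -
  assume lip: "\<And>x y. norm (h x - h y) \<le> L * norm (x - y)"
  have "L-lipschitz_on UNIV h"
  proof (rule lipschitz_onI)
    fix x y :: 'v show "dist (h x) (h y) \<le> L * dist x y" using lip[of x y] by (simp only: dist_norm)
  next
    show "0 \<le> L" using L by simp
  qed
  then show ?thesis by (rule lipschitz_on_continuous_on)
qed

lemma gradF_meas: "i < C \<Longrightarrow> f \<in> borel_measurable N \<Longrightarrow> (\<lambda>x. gradF i (f x)) \<in> borel_measurable N"
  using borel_measurable_continuous_on[OF lip_cont[OF smooth]] by blast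

lemma gF_meas: "f \<in> borel_measurable N \<Longrightarrow> (\<lambda>x. gF (f x)) \<in> borel_measurable N"
  using borel_measurable_continuous_on[OF lip_cont[OF gF_lip]] by blast

definition "ng i t k \<omega> = gradF i (Wt t i k \<omega>)"
definition "xs i t k \<omega> = sg i t k \<omega> - ng i t k \<omega>"
definition "bb t k \<omega> = (\<Sum>i<C. P i *\<^sub>R ng i t k \<omega>)"
definition "aa t k \<omega> = gF (Wb t k \<omega>)"
definition "vv t k \<omega> = (\<Sum>i<C. P i *\<^sub>R sg i t k \<omega>)"

lemma L2_step:
  assumes "t < T" "k < E" "i < C"
  shows "L2 (sg i t k)" "L2 (Wt t i k)" "L2 (ng i t k)" "L2 (xs i t k)"
proof -
  show s: "L2 (sg i t k)" and w: "L2 (Wt t i k)" using L2_all[OF assms(1)] assms by auto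
  show n: "L2 (ng i t k)" unfolding ng_def[abs_def] using L2_gradF[OF assms(3) w] .
  show "L2 (xs i t k)" unfolding xs_def[abs_def] using s n by auto
qed

lemma L2_Wb: "t < T \<Longrightarrow> k \<le> E \<Longrightarrow> L2 (Wb t k)"
proof -
  assume a: "t < T" "k \<le> E"
  have "Wb t k = (\<lambda>\<omega>. \<Sum>i<C. P i *\<^sub>R W t i k \<omega>)" by (rule ext) (simp add: Wb_eq)
  moreover have "L2 (\<lambda>\<omega>. \<Sum>i<C. P i *\<^sub>R W t i k \<omega>)"
  proof (intro L2_sum L2_scaleR)
    fix i assume "i \<in> {..<C}" then show "L2 (W t i k)" using L2_all[OF a(1)] a(2) by auto
  qed
  ultimately show ?thesis by simp
qed

lemma L2_step2:
  assumes "t < T" "k < E"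
  shows "L2 (bb t k)" "L2 (aa t k)" "L2 (vv t k)"
proof -
  show "L2 (bb t k)" unfolding bb_def[abs_def]
    by (intro L2_sum L2_scaleR) (use L2_step[OF assms] in auto)
  show "L2 (vv t k)" unfolding vv_def[abs_def]
    by (intro L2_sum L2_scaleR) (use L2_step[OF assms] in auto)
  show "L2 (aa t k)" unfolding aa_def[abs_def]
    using L2_gF L2_Wb assms by simp
qed

lemma O1:
  assumes t: "t < T" and k: "k < E" and i: "i < C"
  shows "(\<integral>\<omega>. aa t k \<omega> \<bullet> sg i t k \<omega> \<partial>M) = (\<integral>\<omega>. aa t k \<omega> \<bullet> ng i t k \<omega> \<partial>M)"
  unfolding ng_def
proof (rule fresh[OF t k i])
  show "past t k \<subseteq> II" using past_sub t k by simp
  show "past t k \<subseteq> past t k" by simp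
  show "(i, t, k) \<notin> past t k" by (simp add: past_def)
  let ?A = "\<lambda>z. gF (\<Sum>j<C. P j *\<^sub>R client_iter C p \<beta> \<gamma> E G w0 (\<Phi> z) t j k)"
  show "?A \<in> borel_measurable (PiM (past t k) (\<lambda>_. X))"
    by (intro gF_meas borel_measurable_sum borel_measurable_scaleR borel_measurable_const meas_rep(1)) auto
  show "aa t k \<omega> = ?A (Zr (past t k) \<omega>)" for \<omega>
    by (simp add: aa_def Wb_eq rep(1))
  show "L2 (aa t k)" using L2_step2[OF t k] by simp
qed

lemma O2:
  assumes t: "t < T" and k: "k < E" and i: "i < C"
  shows "(\<integral>\<omega>. bb t k \<omega> \<bullet> sg i t k \<omega> \<partial>M) = (\<integral>\<omega>. bb t k \<omega> \<bullet> ng i t k \<omega> \<partial>M)"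
  unfolding ng_def[of i]
proof (rule fresh[OF t k i])
  show "past t k \<subseteq> II" using past_sub t k by simp
  show "past t k \<subseteq> past t k" by simp
  show "(i, t, k) \<notin> past t k" by (simp add: past_def)
  let ?A = "\<lambda>z. (\<Sum>j<C. P j *\<^sub>R gradF j (pert_iter C p \<beta> \<gamma> E G w0 (\<Phi> z) t j k))"
  show "?A \<in> borel_measurable (PiM (past t k) (\<lambda>_. X))"
    by (intro borel_measurable_sum borel_measurable_scaleR borel_measurable_const gradF_meas meas_rep(3)) auto
  show "bb t k \<omega> = ?A (Zr (past t k) \<omega>)" for \<omega>
    by (simp add: bb_def ng_def rep(3))
  show "L2 (bb t k)" using L2_step2[OF t k] by simp
qed

lemma O3:
  assumes t: "t < T" and k: "k < E" and i: "i < C" and j: "j < C" and ij: "j \<noteq> i"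
  shows "(\<integral>\<omega>. xs j t k \<omega> \<bullet> sg i t k \<omega> \<partial>M) = (\<integral>\<omega>. xs j t k \<omega> \<bullet> ng i t k \<omega> \<partial>M)"
  unfolding ng_def[of i]
proof (rule fresh[OF t k i])
  let ?J = "insert (j, t, k) (past t k)"
  show "?J \<subseteq> II" using past_sub t k j by (auto simp: II_def)
  show "past t k \<subseteq> ?J" by auto
  show "(i, t, k) \<notin> ?J" using ij by (simp add: past_def)
  let ?A = "\<lambda>z. G j (pert_iter C p \<beta> \<gamma> E G w0 (\<Phi> z) t j k) (z (j, t, k)) - gradF j (pert_iter C p \<beta> \<gamma> E G w0 (\<Phi> z) t j k)"
  have pm: "(\<lambda>z. pert_iter C p \<beta> \<gamma> E G w0 (\<Phi> z) t j k) \<in> borel_measurable (PiM ?J (\<lambda>_. X))"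
    by (rule meas_rep(3)) (auto simp: j)
  have cm: "(\<lambda>z. z (j, t, k)) \<in> PiM ?J (\<lambda>_. X) \<rightarrow>\<^sub>M X"
    by (rule measurable_component_singleton) simp
  show "?A \<in> borel_measurable (PiM ?J (\<lambda>_. X))"
    by (intro borel_measurable_diff G_comp_meas[OF G_meas[OF j] pm cm] gradF_meas[OF j pm])
  show "xs j t k \<omega> = ?A (Zr ?J \<omega>)" for \<omega>
  proof -
    have "Zr ?J \<omega> (j, t, k) = xi j t k \<omega>" by (simp add: Zr_def)
    moreover have "pert_iter C p \<beta> \<gamma> E G w0 (\<Phi> (Zr ?J \<omega>)) t j k = Wt t j k \<omega>"
      by (rule rep(3)) (auto simp: j)
    ultimately show ?thesis by (simp add: xs_def sg_def ng_def)
  qed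
  show "L2 (xs j t k)" using L2_step[OF t k j] by simp
qed

end

context fl begin

lemma int_sum_mult:
  fixes f :: "'i \<Rightarrow> 'a \<Rightarrow> real"
  assumes "\<And>i. i \<in> A \<Longrightarrow> integrable M (f i)"
  shows "(\<integral>\<omega>. (\<Sum>i\<in>A. c i * f i \<omega>) \<partial>M) = (\<Sum>i\<in>A. c i * (\<integral>\<omega>. f i \<omega> \<partial>M))"
  using Bochner_Integration.integral_sum[where I = A and M = M and f = "\<lambda>i \<omega>. c i * f i \<omega>"] assms by simp

lemma E_av:
  assumes t: "t < T" and k: "k < E"
  shows "(\<integral>\<omega>. aa t k \<omega> \<bullet> vv t k \<omega> \<partial>M) = (\<integral>\<omega>. aa t k \<omega> \<bullet> bb t k \<omega> \<partial>M)"
proof -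
  have aL: "L2 (aa t k)" using L2_step2[OF t k] by simp
  have "(\<integral>\<omega>. aa t k \<omega> \<bullet> vv t k \<omega> \<partial>M) = (\<integral>\<omega>. (\<Sum>i<C. P i * (aa t k \<omega> \<bullet> sg i t k \<omega>)) \<partial>M)"
    by (simp add: vv_def inner_sum_right)
  also have "\<dots> = (\<Sum>i<C. P i * (\<integral>\<omega>. aa t k \<omega> \<bullet> sg i t k \<omega> \<partial>M))"
    by (rule int_sum_mult) (use L2_inner[OF aL] L2_step[OF t k] in auto)
  also have "\<dots> = (\<Sum>i<C. P i * (\<integral>\<omega>. aa t k \<omega> \<bullet> ng i t k \<omega> \<partial>M))"
    using O1[OF t k] by simp
  also have "\<dots> = (\<integral>\<omega>. (\<Sum>i<C. P i * (aa t k \<omega> \<bullet> ng i t k \<omega>)) \<partial>M)"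
    by (rule int_sum_mult[symmetric]) (use L2_inner[OF aL] L2_step[OF t k] in auto)
  also have "\<dots> = (\<integral>\<omega>. aa t k \<omega> \<bullet> bb t k \<omega> \<partial>M)"
    by (simp add: bb_def inner_sum_right)
  finally show ?thesis .
qed

lemma E_vv:
  assumes t: "t < T" and k: "k < E"
  shows "(\<integral>\<omega>. (norm (vv t k \<omega>))\<^sup>2 \<partial>M) \<le> (\<integral>\<omega>. (norm (bb t k \<omega>))\<^sup>2 \<partial>M) + (\<Sum>i<C. (P i)\<^sup>2) * \<sigma>\<^sup>2"
proof -
  have bL: "L2 (bb t k)" using L2_step2[OF t k] by simp
  have xL: "\<And>i. i < C \<Longrightarrow> L2 (xs i t k)" using L2_step[OF t k] by simp
  define q where "q \<omega> = (\<Sum>i<C. P i *\<^sub>R xs i t k \<omega>)" for \<omega>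
  have vq: "vv t k \<omega> = bb t k \<omega> + q \<omega>" for \<omega>
    by (simp add: vv_def bb_def q_def xs_def scaleR_diff_right sum_subtractf)
  have pw: "(norm (vv t k \<omega>))\<^sup>2 = (norm (bb t k \<omega>))\<^sup>2 + 2 * (\<Sum>i<C. P i * (bb t k \<omega> \<bullet> xs i t k \<omega>))
      + (\<Sum>i<C. P i * (\<Sum>j<C. P j * (xs j t k \<omega> \<bullet> xs i t k \<omega>)))" for \<omega>
  proof -
    have "(norm (vv t k \<omega>))\<^sup>2 = (bb t k \<omega> + q \<omega>) \<bullet> (bb t k \<omega> + q \<omega>)"
      by (simp add: vq power2_norm_eq_inner)
    also have "\<dots> = (norm (bb t k \<omega>))\<^sup>2 + 2 * (bb t k \<omega> \<bullet> q \<omega>) + q \<omega> \<bullet> q \<omega>"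
      by (simp add: inner_add_left inner_add_right inner_commute power2_norm_eq_inner)
    also have "bb t k \<omega> \<bullet> q \<omega> = (\<Sum>i<C. P i * (bb t k \<omega> \<bullet> xs i t k \<omega>))"
      by (simp add: q_def inner_sum_right)
    also have "q \<omega> \<bullet> q \<omega> = (\<Sum>i<C. P i * (\<Sum>j<C. P j * (xs j t k \<omega> \<bullet> xs i t k \<omega>)))"
      by (simp add: q_def inner_sum_right inner_sum_left sum_distrib_left)
    finally show ?thesis .
  qed
  have z1: "(\<integral>\<omega>. bb t k \<omega> \<bullet> xs i t k \<omega> \<partial>M) = 0" if i: "i < C" for i
  proof -
    have "(\<integral>\<omega>. bb t k \<omega> \<bullet> xs i t k \<omega> \<partial>M) = (\<integral>\<omega>. bb t k \<omega> \<bullet> sg i t k \<omega> - bb t k \<omega> \<bullet> ng i t k \<omega> \<partial>M)"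
      by (simp add: xs_def inner_diff_right)
    also have "\<dots> = (\<integral>\<omega>. bb t k \<omega> \<bullet> sg i t k \<omega> \<partial>M) - (\<integral>\<omega>. bb t k \<omega> \<bullet> ng i t k \<omega> \<partial>M)"
      by (rule Bochner_Integration.integral_diff) (use L2_inner[OF bL] L2_step[OF t k i] in auto)
    finally show ?thesis using O2[OF t k i] by simp
  qed
  have z2: "(\<integral>\<omega>. xs i t k \<omega> \<bullet> xs j t k \<omega> \<partial>M) = 0" if i: "i < C" and j: "j < C" and ij: "i \<noteq> j" for i j
  proof -
    have "(\<integral>\<omega>. xs i t k \<omega> \<bullet> xs j t k \<omega> \<partial>M) = (\<integral>\<omega>. xs i t k \<omega> \<bullet> sg j t k \<omega> - xs i t k \<omega> \<bullet> ng j t k \<omega> \<partial>M)"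
      by (simp add: xs_def[of j] inner_diff_right)
    also have "\<dots> = (\<integral>\<omega>. xs i t k \<omega> \<bullet> sg j t k \<omega> \<partial>M) - (\<integral>\<omega>. xs i t k \<omega> \<bullet> ng j t k \<omega> \<partial>M)"
      by (rule Bochner_Integration.integral_diff) (use L2_inner[OF xL[OF i]] L2_step[OF t k j] in auto)
    finally show ?thesis using O3[OF t k j i ij] by simp
  qed
  have inner_int: "\<And>i j. i < C \<Longrightarrow> j < C \<Longrightarrow> integrable M (\<lambda>\<omega>. xs j t k \<omega> \<bullet> xs i t k \<omega>)"
    using L2_inner xL by blast
  have I1: "integrable M (\<lambda>\<omega>. \<Sum>i<C. P i * (bb t k \<omega> \<bullet> xs i t k \<omega>))"
    using L2_inner[OF bL xL] by auto
  have I2: "integrable M (\<lambda>\<omega>. \<Sum>i<C. P i * (\<Sum>j<C. P j * (xs j t k \<omega> \<bullet> xs i t k \<omega>)))"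
    using inner_int by (auto intro!: Bochner_Integration.integrable_sum integrable_mult_right)
  have I0: "integrable M (\<lambda>\<omega>. (norm (bb t k \<omega>))\<^sup>2)" using L2_int[OF bL] .
  have e1: "(\<integral>\<omega>. (\<Sum>i<C. P i * (bb t k \<omega> \<bullet> xs i t k \<omega>)) \<partial>M) = 0"
  proof -
    have "(\<integral>\<omega>. (\<Sum>i<C. P i * (bb t k \<omega> \<bullet> xs i t k \<omega>)) \<partial>M) = (\<Sum>i<C. P i * (\<integral>\<omega>. bb t k \<omega> \<bullet> xs i t k \<omega> \<partial>M))"
      by (rule int_sum_mult) (use L2_inner[OF bL xL] in auto)
    also have "\<dots> = 0" using z1 by simp
    finally show ?thesis .
  qed
  have e2: "(\<integral>\<omega>. (\<Sum>i<C. P i * (\<Sum>j<C. P j * (xs j t k \<omega> \<bullet> xs i t k \<omega>))) \<partial>M)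
       = (\<Sum>i<C. (P i)\<^sup>2 * (\<integral>\<omega>. (norm (xs i t k \<omega>))\<^sup>2 \<partial>M))"
  proof -
    have "(\<integral>\<omega>. (\<Sum>i<C. P i * (\<Sum>j<C. P j * (xs j t k \<omega> \<bullet> xs i t k \<omega>))) \<partial>M)
       = (\<Sum>i<C. P i * (\<Sum>j<C. P j * (\<integral>\<omega>. xs j t k \<omega> \<bullet> xs i t k \<omega> \<partial>M)))"
    proof (subst int_sum_mult)
      show "\<And>i. i \<in> {..<C} \<Longrightarrow> integrable M (\<lambda>\<omega>. \<Sum>j<C. P j * (xs j t k \<omega> \<bullet> xs i t k \<omega>))"
        using inner_int by (auto intro!: Bochner_Integration.integrable_sum integrable_mult_right)
      show "(\<Sum>i<C. P i * (\<integral>\<omega>. (\<Sum>j<C. P j * (xs j t k \<omega> \<bullet> xs i t k \<omega>)) \<partial>M))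
         = (\<Sum>i<C. P i * (\<Sum>j<C. P j * (\<integral>\<omega>. xs j t k \<omega> \<bullet> xs i t k \<omega> \<partial>M)))"
        by (intro sum.cong refl arg_cong2[where f="(*)"] int_sum_mult) (use inner_int in auto)
    qed
    also have "\<dots> = (\<Sum>i<C. P i * (P i * (\<integral>\<omega>. xs i t k \<omega> \<bullet> xs i t k \<omega> \<partial>M)))"
    proof (rule sum.cong[OF refl])
      fix i assume i: "i \<in> {..<C}"
      have "(\<Sum>j<C. P j * (\<integral>\<omega>. xs j t k \<omega> \<bullet> xs i t k \<omega> \<partial>M))
          = (\<Sum>j<C. if j = i then P i * (\<integral>\<omega>. xs i t k \<omega> \<bullet> xs i t k \<omega> \<partial>M) else 0)"
        using z2 i by (intro sum.cong) (auto simp: inner_commute)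
      also have "\<dots> = P i * (\<integral>\<omega>. xs i t k \<omega> \<bullet> xs i t k \<omega> \<partial>M)" using i by simp
      finally show "P i * (\<Sum>j<C. P j * (\<integral>\<omega>. xs j t k \<omega> \<bullet> xs i t k \<omega> \<partial>M)) = P i * (P i * (\<integral>\<omega>. xs i t k \<omega> \<bullet> xs i t k \<omega> \<partial>M))"
        by simp
    qed
    also have "\<dots> = (\<Sum>i<C. (P i)\<^sup>2 * (\<integral>\<omega>. (norm (xs i t k \<omega>))\<^sup>2 \<partial>M))"
    proof (rule sum.cong[OF refl])
      fix i
      have e: "(\<lambda>\<omega>. xs i t k \<omega> \<bullet> xs i t k \<omega>) = (\<lambda>\<omega>. (norm (xs i t k \<omega>))\<^sup>2)"
        by (simp only: power2_norm_eq_inner)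
      show "P i * (P i * (\<integral>\<omega>. xs i t k \<omega> \<bullet> xs i t k \<omega> \<partial>M)) = (P i)\<^sup>2 * (\<integral>\<omega>. (norm (xs i t k \<omega>))\<^sup>2 \<partial>M)"
        unfolding e by (simp only: power2_eq_square[of "P i"] mult.assoc)
    qed
    finally show ?thesis .
  qed
  have "(\<integral>\<omega>. (norm (vv t k \<omega>))\<^sup>2 \<partial>M) = (\<integral>\<omega>. (norm (bb t k \<omega>))\<^sup>2 \<partial>M)
      + 2 * (\<integral>\<omega>. (\<Sum>i<C. P i * (bb t k \<omega> \<bullet> xs i t k \<omega>)) \<partial>M)
      + (\<integral>\<omega>. (\<Sum>i<C. P i * (\<Sum>j<C. P j * (xs j t k \<omega> \<bullet> xs i t k \<omega>))) \<partial>M)"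
  proof -
    have "(\<integral>\<omega>. (norm (vv t k \<omega>))\<^sup>2 \<partial>M) = (\<integral>\<omega>. ((norm (bb t k \<omega>))\<^sup>2 + 2 * (\<Sum>i<C. P i * (bb t k \<omega> \<bullet> xs i t k \<omega>)))
      + (\<Sum>i<C. P i * (\<Sum>j<C. P j * (xs j t k \<omega> \<bullet> xs i t k \<omega>))) \<partial>M)"
      by (simp only: pw)
    also have "\<dots> = (\<integral>\<omega>. ((norm (bb t k \<omega>))\<^sup>2 + 2 * (\<Sum>i<C. P i * (bb t k \<omega> \<bullet> xs i t k \<omega>))) \<partial>M)
      + (\<integral>\<omega>. (\<Sum>i<C. P i * (\<Sum>j<C. P j * (xs j t k \<omega> \<bullet> xs i t k \<omega>))) \<partial>M)"
      by (rule Bochner_Integration.integral_add[OF Bochner_Integration.integrable_add[OF I0 integrable_mult_right[OF I1]] I2])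
    also have "(\<integral>\<omega>. ((norm (bb t k \<omega>))\<^sup>2 + 2 * (\<Sum>i<C. P i * (bb t k \<omega> \<bullet> xs i t k \<omega>))) \<partial>M)
       = (\<integral>\<omega>. (norm (bb t k \<omega>))\<^sup>2 \<partial>M) + (\<integral>\<omega>. 2 * (\<Sum>i<C. P i * (bb t k \<omega> \<bullet> xs i t k \<omega>)) \<partial>M)"
      by (rule Bochner_Integration.integral_add[OF I0 integrable_mult_right[OF I1]])
    also have "(\<integral>\<omega>. 2 * (\<Sum>i<C. P i * (bb t k \<omega> \<bullet> xs i t k \<omega>)) \<partial>M) = 2 * (\<integral>\<omega>. (\<Sum>i<C. P i * (bb t k \<omega> \<bullet> xs i t k \<omega>)) \<partial>M)"
      by (rule integral_mult_right_zero)
    finally show ?thesis .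
  qed
  also have "\<dots> = (\<integral>\<omega>. (norm (bb t k \<omega>))\<^sup>2 \<partial>M) + (\<Sum>i<C. (P i)\<^sup>2 * (\<integral>\<omega>. (norm (xs i t k \<omega>))\<^sup>2 \<partial>M))"
    by (simp only: e1 e2 mult_zero_right add_0_right)
  also have "\<dots> \<le> (\<integral>\<omega>. (norm (bb t k \<omega>))\<^sup>2 \<partial>M) + (\<Sum>i<C. (P i)\<^sup>2) * \<sigma>\<^sup>2"
  proof -
    have "(\<Sum>i<C. (P i)\<^sup>2 * (\<integral>\<omega>. (norm (xs i t k \<omega>))\<^sup>2 \<partial>M)) \<le> (\<Sum>i<C. (P i)\<^sup>2 * \<sigma>\<^sup>2)"
    proof (rule sum_mono)
      fix i assume iC: "i \<in> {..<C}"
      have "(\<lambda>\<omega>. (norm (xs i t k \<omega>))\<^sup>2) = (\<lambda>\<omega>. (norm (sg i t k \<omega> - gradF i (Wt t i k \<omega>)))\<^sup>2)"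
        by (simp only: xs_def ng_def)
      then have "(\<integral>\<omega>. (norm (xs i t k \<omega>))\<^sup>2 \<partial>M) \<le> \<sigma>\<^sup>2"
        using variance'[of i t k] t k iC by simp
      then show "(P i)\<^sup>2 * (\<integral>\<omega>. (norm (xs i t k \<omega>))\<^sup>2 \<partial>M) \<le> (P i)\<^sup>2 * \<sigma>\<^sup>2"
        by (intro mult_left_mono) auto
    qed
    also have "(\<Sum>i<C. (P i)\<^sup>2 * \<sigma>\<^sup>2) = (\<Sum>i<C. (P i)\<^sup>2) * \<sigma>\<^sup>2" by (rule sum_distrib_right[symmetric])
    finally show ?thesis by linarith
  qed
  finally show ?thesis .
qed

end

context fl begin

definition "Dev t k \<omega> = (\<Sum>i<C. P i * (norm (Wb t k \<omega> - Wt t i k \<omega>))\<^sup>2)"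

lemma gamma_pos: "\<gamma> > 0"
  using L T E by (simp add: \<gamma>)

lemma Lgamma: "L * \<gamma> \<le> 1"
proof -
  have a: "1 \<le> real T" using T by simp
  have b: "1 \<le> real E" using E by simp
  have "1 \<le> real T * real E" using mult_mono[OF a b] by simp
  then have "1 \<le> sqrt (real T * real E)" by simp
  then have "L * \<gamma> = 1 / (2 * sqrt (real T * real E))" using L by (simp add: \<gamma>)
  also have "\<dots> \<le> 1"
  proof -
    have h1: "0 < 2 * sqrt (real T * real E)" "1 \<le> 2 * sqrt (real T * real E)"
      using \<open>1 \<le> sqrt (real T * real E)\<close> by linarith+
    show ?thesis by (rule divide_le_eq_1[THEN iffD2]) (use h1 in blast)
  qed
  finally show ?thesis .
qed

lemma Dev_int: "t < T \<Longrightarrow> k < E \<Longrightarrow> integrable M (Dev t k)"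
proof -
  assume t: "t < T" and k: "k < E"
  have "\<And>i. i < C \<Longrightarrow> L2 (\<lambda>\<omega>. Wb t k \<omega> - Wt t i k \<omega>)"
    using L2_Wb[OF t] L2_step[OF t k] k by auto
  then have "integrable M (\<lambda>\<omega>. \<Sum>i<C. P i * (norm (Wb t k \<omega> - Wt t i k \<omega>))\<^sup>2)"
    by (auto intro!: Bochner_Integration.integrable_sum integrable_mult_right L2_int)
  then show ?thesis unfolding Dev_def[abs_def] .
qed

lemma aa_bb_pw: "norm (aa t k \<omega> - bb t k \<omega>) ^ 2 \<le> L\<^sup>2 * Dev t k \<omega>"
proof -
  have "aa t k \<omega> - bb t k \<omega> = (\<Sum>i<C. P i *\<^sub>R (gradF i (Wb t k \<omega>) - gradF i (Wt t i k \<omega>)))"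
    by (simp add: aa_def bb_def gF_def ng_def scaleR_diff_right sum_subtractf)
  then have "(norm (aa t k \<omega> - bb t k \<omega>))\<^sup>2 \<le> (\<Sum>i<C. P i) * (\<Sum>i<C. P i * (norm (gradF i (Wb t k \<omega>) - gradF i (Wt t i k \<omega>)))\<^sup>2)"
    using norm_sum_sq_le[of "{..<C}" P] P_nonneg by simp
  also have "\<dots> \<le> 1 * (\<Sum>i<C. P i * (L\<^sup>2 * (norm (Wb t k \<omega> - Wt t i k \<omega>))\<^sup>2))"
    unfolding P_sum
  proof (rule mult_left_mono, rule sum_mono)
    fix i assume i: "i \<in> {..<C}"
    have "(norm (gradF i (Wb t k \<omega>) - gradF i (Wt t i k \<omega>)))\<^sup>2 \<le> (L * norm (Wb t k \<omega> - Wt t i k \<omega>))\<^sup>2"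
      using smooth[of i "Wb t k \<omega>" "Wt t i k \<omega>"] i by (intro power_mono) auto
    then show "P i * (norm (gradF i (Wb t k \<omega>) - gradF i (Wt t i k \<omega>)))\<^sup>2 \<le> P i * (L\<^sup>2 * (norm (Wb t k \<omega> - Wt t i k \<omega>))\<^sup>2)"
      using P_nonneg i by (auto intro!: mult_left_mono simp: power_mult_distrib)
  qed simp
  also have "\<dots> = L\<^sup>2 * Dev t k \<omega>"
    by (simp add: Dev_def sum_distrib_left mult.left_commute)
  finally show ?thesis by simp
qed

lemma step:
  assumes t: "t < T" and k: "k < E"
  shows "\<gamma> * (\<integral>\<omega>. (norm (aa t k \<omega>))\<^sup>2 \<partial>M) \<le>
    2 * ((\<integral>\<omega>. Fb (Wb t k \<omega>) \<partial>M) - (\<integral>\<omega>. Fb (Wb t (Suc k) \<omega>) \<partial>M))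
    + \<gamma> * (L\<^sup>2 * (\<integral>\<omega>. Dev t k \<omega> \<partial>M)) + \<gamma> * (L * \<gamma>) * ((\<Sum>i<C. (P i)\<^sup>2) * \<sigma>\<^sup>2)"
proof -
  have aL: "L2 (aa t k)" and bL: "L2 (bb t k)" and vL: "L2 (vv t k)" using L2_step2[OF t k] by auto
  have w0L: "L2 (Wb t k)" and w1L: "L2 (Wb t (Suc k))" using L2_Wb[OF t] k by auto
  have g: "\<gamma> > 0" by (rule gamma_pos)
  define F0 where "F0 = (\<integral>\<omega>. Fb (Wb t k \<omega>) \<partial>M)"
  define F1 where "F1 = (\<integral>\<omega>. Fb (Wb t (Suc k) \<omega>) \<partial>M)"
  define A where "A = (\<integral>\<omega>. (norm (aa t k \<omega>))\<^sup>2 \<partial>M)"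
  define B where "B = (\<integral>\<omega>. (norm (bb t k \<omega>))\<^sup>2 \<partial>M)"
  define V where "V = (\<integral>\<omega>. (norm (vv t k \<omega>))\<^sup>2 \<partial>M)"
  define D where "D = (\<integral>\<omega>. Dev t k \<omega> \<partial>M)"
  define Xv where "Xv = (\<integral>\<omega>. aa t k \<omega> \<bullet> vv t k \<omega> \<partial>M)"
  define Xb where "Xb = (\<integral>\<omega>. aa t k \<omega> \<bullet> bb t k \<omega> \<partial>M)"
  define S where "S = (\<Sum>i<C. (P i)\<^sup>2) * \<sigma>\<^sup>2"
  have iF0: "integrable M (\<lambda>\<omega>. Fb (Wb t k \<omega>))" using Fb_int[OF w0L] .
  have iF1: "integrable M (\<lambda>\<omega>. Fb (Wb t (Suc k) \<omega>))" using Fb_int[OF w1L] .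
  have iXv: "integrable M (\<lambda>\<omega>. aa t k \<omega> \<bullet> vv t k \<omega>)" using L2_inner[OF aL vL] .
  have iXb: "integrable M (\<lambda>\<omega>. aa t k \<omega> \<bullet> bb t k \<omega>)" using L2_inner[OF aL bL] .
  have iA: "integrable M (\<lambda>\<omega>. (norm (aa t k \<omega>))\<^sup>2)" using L2_int[OF aL] .
  have iB: "integrable M (\<lambda>\<omega>. (norm (bb t k \<omega>))\<^sup>2)" using L2_int[OF bL] .
  have iV: "integrable M (\<lambda>\<omega>. (norm (vv t k \<omega>))\<^sup>2)" using L2_int[OF vL] .
  have iD: "integrable M (Dev t k)" using Dev_int[OF t k] .
  have p1: "Fb (Wb t (Suc k) \<omega>) \<le> Fb (Wb t k \<omega>) - \<gamma> * (aa t k \<omega> \<bullet> vv t k \<omega>) + (L * \<gamma>\<^sup>2 / 2) * (norm (vv t k \<omega>))\<^sup>2" for \<omega>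
  proof -
    have e: "Wb t (Suc k) \<omega> - Wb t k \<omega> = - (\<gamma> *\<^sub>R vv t k \<omega>)" by (simp add: Wb_Suc vv_def)
    show ?thesis using Fb_upper[of "Wb t (Suc k) \<omega>" "Wb t k \<omega>"] unfolding e
      by (simp add: aa_def power_mult_distrib)
  qed
  have I1: "F1 \<le> F0 - \<gamma> * Xv + (L * \<gamma>\<^sup>2 / 2) * V"
  proof -
    have "F1 \<le> (\<integral>\<omega>. Fb (Wb t k \<omega>) - \<gamma> * (aa t k \<omega> \<bullet> vv t k \<omega>) + (L * \<gamma>\<^sup>2 / 2) * (norm (vv t k \<omega>))\<^sup>2 \<partial>M)"
      unfolding F1_def using iF0 iF1 iXv iV p1 by (intro integral_mono) auto
    also have "\<dots> = F0 - \<gamma> * Xv + (L * \<gamma>\<^sup>2 / 2) * V"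
      unfolding F0_def Xv_def V_def using iF0 iXv iV by simp
    finally show ?thesis .
  qed
  have p2: "- (aa t k \<omega> \<bullet> bb t k \<omega>) \<le> (L\<^sup>2 * Dev t k \<omega> - (norm (aa t k \<omega>))\<^sup>2 - (norm (bb t k \<omega>))\<^sup>2) / 2" for \<omega>
  proof -
    have "(norm (aa t k \<omega> - bb t k \<omega>))\<^sup>2 = (norm (aa t k \<omega>))\<^sup>2 - 2 * (aa t k \<omega> \<bullet> bb t k \<omega>) + (norm (bb t k \<omega>))\<^sup>2"
      by (simp add: power2_norm_eq_inner inner_diff_left inner_diff_right inner_commute)
    then show ?thesis using aa_bb_pw[of t k \<omega>] by simp
  qed
  have I2: "- Xb \<le> (L\<^sup>2 * D - A - B) / 2"
  proof -
    have "(\<integral>\<omega>. - (aa t k \<omega> \<bullet> bb t k \<omega>) \<partial>M) \<le> (\<integral>\<omega>. (L\<^sup>2 * Dev t k \<omega> - (norm (aa t k \<omega>))\<^sup>2 - (norm (bb t k \<omega>))\<^sup>2) / 2 \<partial>M)"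
      using iXb iA iB iD p2 by (intro integral_mono) auto
    also have "\<dots> = (L\<^sup>2 * D - A - B) / 2"
      unfolding A_def B_def D_def using iA iB iD by simp
    finally show ?thesis unfolding Xb_def by simp
  qed
  have I3: "Xv = Xb" unfolding Xv_def Xb_def by (rule E_av[OF t k])
  have I4: "V \<le> B + S" unfolding V_def B_def S_def by (rule E_vv[OF t k])
  have B0: "0 \<le> B" unfolding B_def by simp
  have c0: "0 \<le> L * \<gamma>\<^sup>2 / 2" using L g by simp
  have J2: "\<gamma> * (- Xb) \<le> \<gamma> * ((L\<^sup>2 * D - A - B) / 2)" using I2 g by (intro mult_left_mono) auto
  have J4: "(L * \<gamma>\<^sup>2 / 2) * V \<le> (L * \<gamma>\<^sup>2 / 2) * (B + S)" using I4 c0 by (intro mult_left_mono) auto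
  have J5: "(L * \<gamma>\<^sup>2 / 2) * B \<le> (\<gamma> / 2) * B"
  proof -
    have "L * \<gamma>\<^sup>2 / 2 = (L * \<gamma>) * \<gamma> / 2" by (simp add: power2_eq_square)
    also have "\<dots> \<le> 1 * \<gamma> / 2" using Lgamma g by (intro divide_right_mono mult_right_mono) auto
    finally show ?thesis using B0 by (intro mult_right_mono) auto
  qed
  have "\<gamma> * A \<le> 2 * (F0 - F1) + \<gamma> * (L\<^sup>2 * D) + \<gamma> * (L * \<gamma>) * S"
    using I1 I3 J2 J4 J5 by (simp add: algebra_simps power2_eq_square)
  then show ?thesis unfolding A_def F0_def F1_def D_def S_def .
qed

end

lemma sq3: "(a + b + c :: real)\<^sup>2 \<le> 3 * (a\<^sup>2 + b\<^sup>2 + c\<^sup>2)"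
proof -
  have "0 \<le> (a - b)\<^sup>2 + (b - c)\<^sup>2 + (a - c)\<^sup>2" by simp
  then show ?thesis by (simp add: power2_diff power2_sum algebra_simps)
qed

lemma norm3: "(norm (x + y + z :: 'v::real_normed_vector))\<^sup>2 \<le> 3 * ((norm x)\<^sup>2 + (norm y)\<^sup>2 + (norm z)\<^sup>2)"
proof -
  have "(norm (x + y + z))\<^sup>2 \<le> (norm x + norm y + norm z)\<^sup>2"
    by (intro power_mono) (auto intro: order_trans[OF norm_triangle_ineq] add_right_mono)
  also have "\<dots> \<le> 3 * ((norm x)\<^sup>2 + (norm y)\<^sup>2 + (norm z)\<^sup>2)" by (rule sq3)
  finally show ?thesis .
qed

lemma norm2: "(norm (x - y :: 'v::real_normed_vector))\<^sup>2 \<le> 2 * (norm x)\<^sup>2 + 2 * (norm y)\<^sup>2"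
proof -
  have "(norm (x - y))\<^sup>2 \<le> (norm x + norm y)\<^sup>2"
    by (intro power_mono norm_triangle_ineq4) auto
  also have "\<dots> \<le> 2 * (norm x)\<^sup>2 + 2 * (norm y)\<^sup>2" by (rule sq2)
  finally show ?thesis .
qed

context fl begin

lemma jensenP: "(norm (\<Sum>n<C. P n *\<^sub>R f n))\<^sup>2 \<le> (\<Sum>n<C. P n * (norm (f n))\<^sup>2)"
  using norm_sum_sq_le[of "{..<C}" P f] P_nonneg P_sum by simp

lemma jensen_row:
  assumes i: "i < C"
  shows "(norm (\<Sum>n<C. (p i n / P i) *\<^sub>R f n))\<^sup>2 \<le> (\<Sum>n<C. (p i n / P i) * (norm (f n))\<^sup>2)"
proof -
  have Pi: "P i > 0" using p_pos[OF i] by (simp add: P_def)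
  have s: "(\<Sum>n<C. p i n / P i) = 1" using Pi by (simp add: sum_divide_distrib[symmetric] P_pw[symmetric])
  show ?thesis using norm_sum_sq_le[of "{..<C}" "\<lambda>n. p i n / P i" f] p_nonneg i Pi s by simp
qed

lemma mix_bound:
  "(\<Sum>i<C. P i * (norm ((\<Sum>n<C. P n *\<^sub>R f n) - (\<Sum>n<C. (p i n / P i) *\<^sub>R f n)))\<^sup>2)
    \<le> 4 * (\<Sum>n<C. P n * (norm (f n))\<^sup>2)"
proof -
  let ?Q = "\<Sum>n<C. P n * (norm (f n))\<^sup>2"
  have "(\<Sum>i<C. P i * (norm ((\<Sum>n<C. P n *\<^sub>R f n) - (\<Sum>n<C. (p i n / P i) *\<^sub>R f n)))\<^sup>2)
     \<le> (\<Sum>i<C. P i * (2 * ?Q + 2 * (\<Sum>n<C. (p i n / P i) * (norm (f n))\<^sup>2)))"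
  proof (rule sum_mono)
    fix i assume i: "i \<in> {..<C}"
    have "(norm ((\<Sum>n<C. P n *\<^sub>R f n) - (\<Sum>n<C. (p i n / P i) *\<^sub>R f n)))\<^sup>2
        \<le> 2 * (norm (\<Sum>n<C. P n *\<^sub>R f n))\<^sup>2 + 2 * (norm (\<Sum>n<C. (p i n / P i) *\<^sub>R f n))\<^sup>2"
      by (rule norm2)
    also have "\<dots> \<le> 2 * ?Q + 2 * (\<Sum>n<C. (p i n / P i) * (norm (f n))\<^sup>2)"
      using jensenP[of f] jensen_row[of i f] i by simp
    finally show "P i * (norm ((\<Sum>n<C. P n *\<^sub>R f n) - (\<Sum>n<C. (p i n / P i) *\<^sub>R f n)))\<^sup>2
        \<le> P i * (2 * ?Q + 2 * (\<Sum>n<C. (p i n / P i) * (norm (f n))\<^sup>2))"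
      using P_nonneg i by (intro mult_left_mono) auto
  qed
  also have "\<dots> = (\<Sum>i<C. 2 * ?Q * P i + 2 * (P i * (\<Sum>n<C. (p i n / P i) * (norm (f n))\<^sup>2)))"
    by (intro sum.cong) (simp_all add: algebra_simps)
  also have "\<dots> = 2 * ?Q * (\<Sum>i<C. P i) + 2 * (\<Sum>i<C. P i * (\<Sum>n<C. (p i n / P i) * (norm (f n))\<^sup>2))"
    by (simp add: sum.distrib sum_distrib_left)
  also have "(\<Sum>i<C. P i * (\<Sum>n<C. (p i n / P i) * (norm (f n))\<^sup>2)) = (\<Sum>i<C. \<Sum>n<C. p i n * (norm (f n))\<^sup>2)"
  proof (rule sum.cong[OF refl])
    fix i assume i: "i \<in> {..<C}"
    then have "P i \<noteq> 0" using p_pos[of i] by (simp add: P_def)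
    then show "P i * (\<Sum>n<C. (p i n / P i) * (norm (f n))\<^sup>2) = (\<Sum>n<C. p i n * (norm (f n))\<^sup>2)"
      by (simp add: sum_distrib_left)
  qed
  also have "(\<Sum>i<C. \<Sum>n<C. p i n * (norm (f n))\<^sup>2) = (\<Sum>n<C. P n * (norm (f n))\<^sup>2)"
    by (subst sum.swap) (simp add: sum_distrib_right[symmetric] P_col)
  finally show ?thesis by (simp add: P_sum)
qed

end

context fl begin

definition "es i t k \<omega> = \<gamma> *\<^sub>R (\<Sum>s<k. sg i t s \<omega>)"

lemma W_es: "W t i k \<omega> = ST t \<omega> - es i t k \<omega>"
  by (simp add: W_expand es_def)

lemma Wb_es: "Wb t k \<omega> = ST t \<omega> - (\<Sum>i<C. P i *\<^sub>R es i t k \<omega>)"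
  by (simp add: Wb_eq W_es scaleR_diff_right sum_subtractf sum_P_const)

lemma U_es:
  assumes i: "i < C"
  shows "U (Suc t) i \<omega> - ST (Suc t) \<omega> = (\<Sum>n<C. P n *\<^sub>R es n t E \<omega>) - (\<Sum>n<C. (p i n / P i) *\<^sub>R es n t E \<omega>)"
proof -
  have Pi: "P i \<noteq> 0" using p_pos[OF i] by (simp add: P_def)
  have "ST (Suc t) \<omega> = ST t \<omega> - (\<Sum>n<C. P n *\<^sub>R es n t E \<omega>)"
    by (simp add: ST_def W_es scaleR_diff_right sum_subtractf sum_P_const)
  moreover have "U (Suc t) i \<omega> = ST t \<omega> - (\<Sum>n<C. (p i n / P i) *\<^sub>R es n t E \<omega>)"
  proof -
    have "U (Suc t) i \<omega> = (1 / P i) *\<^sub>R (\<Sum>n<C. p i n *\<^sub>R (ST t \<omega> - es n t E \<omega>))"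
      by (simp add: U_Suc W_es)
    also have "\<dots> = (1 / P i) *\<^sub>R ((\<Sum>n<C. p i n) *\<^sub>R ST t \<omega> - (\<Sum>n<C. p i n *\<^sub>R es n t E \<omega>))"
      by (simp add: scaleR_diff_right sum_subtractf scaleR_sum_left)
    also have "\<dots> = ST t \<omega> - (\<Sum>n<C. (p i n / P i) *\<^sub>R es n t E \<omega>)"
      using Pi by (simp add: P_pw[symmetric] scaleR_diff_right scaleR_sum_right)
    finally show ?thesis .
  qed
  ultimately show ?thesis by simp
qed

lemma U_es0: "U 0 i \<omega> - ST 0 \<omega> = 0"
  by (simp add: U_0 ST_def)

lemma Dev_pw:
  "Dev t k \<omega> \<le> (3 * \<beta>\<^sup>2 + 3) * (\<Sum>i<C. P i * (norm (es i t k \<omega>))\<^sup>2)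
     + 12 * (1 - \<beta>)\<^sup>2 * (if t = 0 then 0 else (\<Sum>n<C. P n * (norm (es n (t - 1) E \<omega>))\<^sup>2))"
proof -
  define Q where "Q = (\<Sum>i<C. P i * (norm (es i t k \<omega>))\<^sup>2)"
  define R where "R = (\<Sum>i<C. P i * (norm (U t i \<omega> - ST t \<omega>))\<^sup>2)"
  have d: "Wb t k \<omega> - Wt t i k \<omega> = \<beta> *\<^sub>R es i t k \<omega> + (- ((1 - \<beta>) *\<^sub>R (U t i \<omega> - ST t \<omega>))) + (- (\<Sum>j<C. P j *\<^sub>R es j t k \<omega>))" for i
    by (simp add: Wb_es Wt_eq W_es algebra_simps)
  have "Dev t k \<omega> \<le> (\<Sum>i<C. P i * (3 * (\<beta>\<^sup>2 * (norm (es i t k \<omega>))\<^sup>2 + (1 - \<beta>)\<^sup>2 * (norm (U t i \<omega> - ST t \<omega>))\<^sup>2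
        + (norm (\<Sum>j<C. P j *\<^sub>R es j t k \<omega>))\<^sup>2)))"
    unfolding Dev_def
  proof (rule sum_mono)
    fix i assume i: "i \<in> {..<C}"
    have "(norm (Wb t k \<omega> - Wt t i k \<omega>))\<^sup>2 \<le> 3 * ((norm (\<beta> *\<^sub>R es i t k \<omega>))\<^sup>2 + (norm (- ((1 - \<beta>) *\<^sub>R (U t i \<omega> - ST t \<omega>))))\<^sup>2
        + (norm (- (\<Sum>j<C. P j *\<^sub>R es j t k \<omega>)))\<^sup>2)"
      unfolding d by (rule norm3)
    also have "\<dots> = 3 * (\<beta>\<^sup>2 * (norm (es i t k \<omega>))\<^sup>2 + (1 - \<beta>)\<^sup>2 * (norm (U t i \<omega> - ST t \<omega>))\<^sup>2
        + (norm (\<Sum>j<C. P j *\<^sub>R es j t k \<omega>))\<^sup>2)"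
      by (simp only: norm_minus_cancel norm_scaleR power_mult_distrib power2_abs)
    finally show "P i * (norm (Wb t k \<omega> - Wt t i k \<omega>))\<^sup>2 \<le> P i * (3 * (\<beta>\<^sup>2 * (norm (es i t k \<omega>))\<^sup>2 + (1 - \<beta>)\<^sup>2 * (norm (U t i \<omega> - ST t \<omega>))\<^sup>2
        + (norm (\<Sum>j<C. P j *\<^sub>R es j t k \<omega>))\<^sup>2))"
      using P_nonneg i by (intro mult_left_mono) auto
  qed
  also have "\<dots> = 3 * \<beta>\<^sup>2 * Q + 3 * (1 - \<beta>)\<^sup>2 * R + 3 * (norm (\<Sum>j<C. P j *\<^sub>R es j t k \<omega>))\<^sup>2 * (\<Sum>i<C. P i)"
    unfolding Q_def R_def
    by (simp add: sum.distrib sum_distrib_left sum_distrib_right algebra_simps)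
  also have "\<dots> \<le> 3 * \<beta>\<^sup>2 * Q + 3 * (1 - \<beta>)\<^sup>2 * R + 3 * Q"
    using jensenP[of "\<lambda>j. es j t k \<omega>"] unfolding P_sum Q_def by simp
  finally have D1: "Dev t k \<omega> \<le> 3 * \<beta>\<^sup>2 * Q + 3 * (1 - \<beta>)\<^sup>2 * R + 3 * Q" .
  have R4: "R \<le> 4 * (if t = 0 then 0 else (\<Sum>n<C. P n * (norm (es n (t - 1) E \<omega>))\<^sup>2))"
  proof (cases t)
    case 0 then show ?thesis by (simp add: R_def U_es0)
  next
    case (Suc t0)
    have "R = (\<Sum>i<C. P i * (norm ((\<Sum>n<C. P n *\<^sub>R es n t0 E \<omega>) - (\<Sum>n<C. (p i n / P i) *\<^sub>R es n t0 E \<omega>)))\<^sup>2)"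
      unfolding R_def Suc by (intro sum.cong refl) (simp add: U_es)
    also have "\<dots> \<le> 4 * (\<Sum>n<C. P n * (norm (es n t0 E \<omega>))\<^sup>2)" by (rule mix_bound)
    finally show ?thesis using Suc by simp
  qed
  have c: "0 \<le> 3 * (1 - \<beta>)\<^sup>2" by simp
  have "3 * (1 - \<beta>)\<^sup>2 * R \<le> 3 * (1 - \<beta>)\<^sup>2 * (4 * (if t = 0 then 0 else (\<Sum>n<C. P n * (norm (es n (t - 1) E \<omega>))\<^sup>2)))"
    using R4 c by (rule mult_left_mono)
  then show ?thesis using D1 unfolding Q_def by (simp add: algebra_simps)
qed

end

context fl begin

lemma es_bound:
  assumes t: "t < T" and k: "k \<le> E" and i: "i < C"
  shows "integrable M (\<lambda>\<omega>. (norm (es i t k \<omega>))\<^sup>2) \<and> (\<integral>\<omega>. (norm (es i t k \<omega>))\<^sup>2 \<partial>M) \<le> \<gamma>\<^sup>2 * ((real E)\<^sup>2 * Gb\<^sup>2)"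
proof -
  have sL: "\<And>s. s < k \<Longrightarrow> L2 (sg i t s)" using L2_step(1)[OF t _ i] k by simp
  have L: "L2 (es i t k)" unfolding es_def[abs_def] using sL by (intro L2_scaleR L2_sum) auto
  have iS: "\<And>s. s < k \<Longrightarrow> integrable M (\<lambda>\<omega>. (norm (sg i t s \<omega>))\<^sup>2)" using sL L2_int by blast
  have pw: "(norm (es i t k \<omega>))\<^sup>2 \<le> \<gamma>\<^sup>2 * (real k * (\<Sum>s<k. (norm (sg i t s \<omega>))\<^sup>2))" for \<omega>
  proof -
    have "(norm (\<Sum>s<k. 1 *\<^sub>R sg i t s \<omega>))\<^sup>2 \<le> (\<Sum>s<k. (1::real)) * (\<Sum>s<k. 1 * (norm (sg i t s \<omega>))\<^sup>2)"
      by (rule norm_sum_sq_le) simp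
    then have "(norm (\<Sum>s<k. sg i t s \<omega>))\<^sup>2 \<le> real k * (\<Sum>s<k. (norm (sg i t s \<omega>))\<^sup>2)" by simp
    then show ?thesis unfolding es_def by (simp add: power_mult_distrib mult_left_mono)
  qed
  have "(\<integral>\<omega>. (norm (es i t k \<omega>))\<^sup>2 \<partial>M) \<le> (\<integral>\<omega>. \<gamma>\<^sup>2 * (real k * (\<Sum>s<k. (norm (sg i t s \<omega>))\<^sup>2)) \<partial>M)"
    using L2_int[OF L] iS pw by (intro integral_mono) (auto intro!: integrable_mult_right Bochner_Integration.integrable_sum)
  also have "\<dots> = \<gamma>\<^sup>2 * (real k * (\<Sum>s<k. (\<integral>\<omega>. (norm (sg i t s \<omega>))\<^sup>2 \<partial>M)))"
    using iS by (simp add: Bochner_Integration.integral_sum)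
  also have "\<dots> \<le> \<gamma>\<^sup>2 * (real k * (\<Sum>s<k. Gb\<^sup>2))"
    using gnorm'[OF i t] k by (intro mult_left_mono sum_mono) auto
  also have "\<dots> = \<gamma>\<^sup>2 * ((real k)\<^sup>2 * Gb\<^sup>2)" by (simp add: power2_eq_square)
  also have "\<dots> \<le> \<gamma>\<^sup>2 * ((real E)\<^sup>2 * Gb\<^sup>2)"
    using k by (intro mult_left_mono mult_right_mono power_mono) auto
  finally show ?thesis using L2_int[OF L] by simp
qed

lemma Pes_bound:
  assumes t: "t < T" and k: "k \<le> E"
  shows "integrable M (\<lambda>\<omega>. \<Sum>i<C. P i * (norm (es i t k \<omega>))\<^sup>2) \<and>
         (\<integral>\<omega>. (\<Sum>i<C. P i * (norm (es i t k \<omega>))\<^sup>2) \<partial>M) \<le> \<gamma>\<^sup>2 * ((real E)\<^sup>2 * Gb\<^sup>2)"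
proof -
  have ii: "\<And>i. i \<in> {..<C} \<Longrightarrow> integrable M (\<lambda>\<omega>. (norm (es i t k \<omega>))\<^sup>2)" using es_bound[OF t k] by auto
  have "(\<integral>\<omega>. (\<Sum>i<C. P i * (norm (es i t k \<omega>))\<^sup>2) \<partial>M) = (\<Sum>i<C. P i * (\<integral>\<omega>. (norm (es i t k \<omega>))\<^sup>2 \<partial>M))"
    by (rule int_sum_mult) (use ii in auto)
  also have "\<dots> \<le> (\<Sum>i<C. P i * (\<gamma>\<^sup>2 * ((real E)\<^sup>2 * Gb\<^sup>2)))"
    using es_bound[OF t k] P_nonneg by (intro sum_mono mult_left_mono) auto
  also have "\<dots> = \<gamma>\<^sup>2 * ((real E)\<^sup>2 * Gb\<^sup>2)" by (simp add: sum_distrib_right[symmetric] P_sum)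
  finally show ?thesis using ii by (auto intro!: Bochner_Integration.integrable_sum integrable_mult_right)
qed

lemma Dev_bound:
  assumes t: "t < T" and k: "k < E"
  shows "(\<integral>\<omega>. Dev t k \<omega> \<partial>M) \<le> (3 * \<beta>\<^sup>2 + 3 + 12 * (1 - \<beta>)\<^sup>2) * (\<gamma>\<^sup>2 * ((real E)\<^sup>2 * Gb\<^sup>2))"
proof -
  define K0 where "K0 = \<gamma>\<^sup>2 * ((real E)\<^sup>2 * Gb\<^sup>2)"
  define Xq where "Xq \<omega> = (\<Sum>i<C. P i * (norm (es i t k \<omega>))\<^sup>2)" for \<omega>
  define Yq where "Yq \<omega> = (if t = 0 then 0 else (\<Sum>n<C. P n * (norm (es n (t - 1) E \<omega>))\<^sup>2))" for \<omega>
  have X: "integrable M Xq \<and> integral\<^sup>L M Xq \<le> K0"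
    using Pes_bound[OF t] k unfolding Xq_def[abs_def] K0_def by simp
  have Y: "integrable M Yq \<and> integral\<^sup>L M Yq \<le> K0"
  proof (cases "t = 0")
    case True
    then show ?thesis unfolding Yq_def[abs_def] K0_def by simp
  next
    case False
    then have "t - 1 < T" using t by simp
    then show ?thesis using Pes_bound[of "t - 1" E] False unfolding Yq_def[abs_def] K0_def by simp
  qed
  have "(\<integral>\<omega>. Dev t k \<omega> \<partial>M) \<le> (\<integral>\<omega>. (3 * \<beta>\<^sup>2 + 3) * Xq \<omega> + 12 * (1 - \<beta>)\<^sup>2 * Yq \<omega> \<partial>M)"
    using Dev_int[OF t k] X Y Dev_pw[of t k] unfolding Xq_def Yq_def
    by (intro integral_mono) (auto simp: Xq_def[symmetric] Yq_def[symmetric])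
  also have "\<dots> = (3 * \<beta>\<^sup>2 + 3) * integral\<^sup>L M Xq + 12 * (1 - \<beta>)\<^sup>2 * integral\<^sup>L M Yq"
    using X Y by simp
  also have "\<dots> \<le> (3 * \<beta>\<^sup>2 + 3) * K0 + 12 * (1 - \<beta>)\<^sup>2 * K0"
    using X Y by (intro add_mono mult_left_mono) auto
  finally show ?thesis unfolding K0_def by (simp add: algebra_simps)
qed

end

context fl begin

definition "Fv t k = (\<integral>\<omega>. Fb (Wb t k \<omega>) \<partial>M)"
definition "Av t k = (\<integral>\<omega>. (norm (aa t k \<omega>))\<^sup>2 \<partial>M)"

lemma sum_bound:
  "\<gamma> * (\<Sum>t<T. \<Sum>k<E. Av t k) \<le> 2 * (Fb w0 - finf)
     + real T * real E * (\<gamma> * (L\<^sup>2 * ((3 * \<beta>\<^sup>2 + 3 + 12 * (1 - \<beta>)\<^sup>2) * (\<gamma>\<^sup>2 * ((real E)\<^sup>2 * Gb\<^sup>2))))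
                         + \<gamma> * (L * \<gamma>) * ((\<Sum>i<C. (P i)\<^sup>2) * \<sigma>\<^sup>2))"
proof -
  define Z where "Z = \<gamma> * (L\<^sup>2 * ((3 * \<beta>\<^sup>2 + 3 + 12 * (1 - \<beta>)\<^sup>2) * (\<gamma>\<^sup>2 * ((real E)\<^sup>2 * Gb\<^sup>2))))
                         + \<gamma> * (L * \<gamma>) * ((\<Sum>i<C. (P i)\<^sup>2) * \<sigma>\<^sup>2)"
  have g: "\<gamma> > 0" by (rule gamma_pos)
  have st: "\<gamma> * Av t k \<le> 2 * (Fv t k - Fv t (Suc k)) + Z" if t: "t < T" and k: "k < E" for t k
  proof -
    have "\<gamma> * (L\<^sup>2 * (\<integral>\<omega>. Dev t k \<omega> \<partial>M)) \<le> \<gamma> * (L\<^sup>2 * ((3 * \<beta>\<^sup>2 + 3 + 12 * (1 - \<beta>)\<^sup>2) * (\<gamma>\<^sup>2 * ((real E)\<^sup>2 * Gb\<^sup>2))))"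
      using Dev_bound[OF t k] g by (intro mult_left_mono) auto
    then show ?thesis using step[OF t k] unfolding Av_def Fv_def Z_def by linarith
  qed
  have "\<gamma> * (\<Sum>t<T. \<Sum>k<E. Av t k) = (\<Sum>t<T. \<Sum>k<E. \<gamma> * Av t k)"
    by (simp add: sum_distrib_left)
  also have "\<dots> \<le> (\<Sum>t<T. \<Sum>k<E. 2 * (Fv t k - Fv t (Suc k)) + Z)"
    using st by (intro sum_mono) auto
  also have "\<dots> = (\<Sum>t<T. 2 * (Fv t 0 - Fv t E) + real E * Z)"
  proof (rule sum.cong[OF refl])
    fix t
    have "(\<Sum>k<E. 2 * (Fv t k - Fv t (Suc k)) + Z) = (\<Sum>k<E. 2 * (Fv t k - Fv t (Suc k))) + (\<Sum>k<E. Z)"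
      by (rule sum.distrib)
    also have "(\<Sum>k<E. 2 * (Fv t k - Fv t (Suc k))) = 2 * (\<Sum>k<E. Fv t k - Fv t (Suc k))"
      by (rule sum_distrib_left[symmetric])
    also have "(\<Sum>k<E. Fv t k - Fv t (Suc k)) = Fv t 0 - Fv t E"
      by (rule sum_lessThan_telescope')
    finally show "(\<Sum>k<E. 2 * (Fv t k - Fv t (Suc k)) + Z) = 2 * (Fv t 0 - Fv t E) + real E * Z"
      by simp
  qed
  also have "\<dots> = (\<Sum>t<T. 2 * (Fv t 0 - Fv (Suc t) 0) + real E * Z)"
    by (simp add: Fv_def Wb_round)
  also have "\<dots> = 2 * (Fv 0 0 - Fv T 0) + real T * (real E * Z)"
  proof -
    have "(\<Sum>t<T. 2 * (Fv t 0 - Fv (Suc t) 0) + real E * Z) = (\<Sum>t<T. 2 * (Fv t 0 - Fv (Suc t) 0)) + (\<Sum>t<T. real E * Z)"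
      by (rule sum.distrib)
    also have "(\<Sum>t<T. 2 * (Fv t 0 - Fv (Suc t) 0)) = 2 * (\<Sum>t<T. Fv t 0 - Fv (Suc t) 0)"
      by (rule sum_distrib_left[symmetric])
    also have "(\<Sum>t<T. Fv t 0 - Fv (Suc t) 0) = Fv 0 0 - Fv T 0"
      by (rule sum_lessThan_telescope'[where f = "\<lambda>t. Fv t 0"])
    finally show ?thesis by simp
  qed
  also have "Fv 0 0 = Fb w0"
    by (simp add: Fv_def Wb_eq W_0 ST_def sum_P_const prob_space)
  finally have X: "\<gamma> * (\<Sum>t<T. \<Sum>k<E. Av t k) \<le> 2 * (Fb w0 - Fv T 0) + real T * (real E * Z)" .
  have fT: "Fv T 0 \<ge> finf"
  proof -
    obtain T' where T': "T = Suc T'" using T by (cases T) auto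
    have "Fv T 0 = (\<integral>\<omega>. Fb (Wb T' E \<omega>) \<partial>M)" by (simp add: Fv_def T' Wb_round)
    also have "\<dots> \<ge> (\<integral>\<omega>. finf \<partial>M)"
      using Fb_int[OF L2_Wb[of T' E]] T' lower by (intro integral_mono) (auto simp: Fb_def P_def)
    finally show ?thesis by (simp add: prob_space)
  qed
  have "\<gamma> * (\<Sum>t<T. \<Sum>k<E. Av t k) \<le> 2 * (Fb w0 - finf) + real T * (real E * Z)" 
  proof -
    have "2 * (Fb w0 - Fv T 0) + real T * (real E * Z) \<le> 2 * (Fb w0 - finf) + real T * (real E * Z)"
      using fT by simp
    then show ?thesis using X by (rule order_trans[rotated])
  qed
  then show ?thesis unfolding Z_def by (simp add: algebra_simps)
qed

end

context fl begin

lemma main_loc: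
  shows
    "(\<forall>t<T. \<forall>k<E. integrable M (\<lambda>\<omega>. (norm (\<Sum>i<C. pw p C i *\<^sub>R
          gradF i (avg_iter C p \<beta> \<gamma> E G w0 (\<lambda>i t k. xi i t k \<omega>) t k)))\<^sup>2)) \<and>
     measure_pmf.expectation (pmf_of_set ({..<T} \<times> {..<E}))
       (\<lambda>(t, k). \<integral>\<omega>. (norm (\<Sum>i<C. pw p C i *\<^sub>R
          gradF i (avg_iter C p \<beta> \<gamma> E G w0 (\<lambda>i t k. xi i t k \<omega>) t k)))\<^sup>2 \<partial>M)
     \<le> 1 / sqrt (real T) *
         (4 * L * ((\<Sum>i<C. pw p C i * F i w0) - finf) / sqrt (real E)
          + (\<Sum>i<C. (pw p C i)\<^sup>2) * \<sigma>\<^sup>2 / (2 * sqrt (real E)))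
       + real E * Gb\<^sup>2 / real T * (4 + (1 - \<beta>)\<^sup>2 + 8 * (1 - 1 / \<beta>)\<^sup>2)"
proof -
  have eqA: "(\<Sum>i<C. pw p C i *\<^sub>R gradF i (avg_iter C p \<beta> \<gamma> E G w0 (\<lambda>i t k. xi i t k \<omega>) t k)) = aa t k \<omega>" for t k \<omega>
    by (simp add: aa_def gF_def Wb_def xw_def P_def)
  have int: "\<forall>t<T. \<forall>k<E. integrable M (\<lambda>\<omega>. (norm (\<Sum>i<C. pw p C i *\<^sub>R
          gradF i (avg_iter C p \<beta> \<gamma> E G w0 (\<lambda>i t k. xi i t k \<omega>) t k)))\<^sup>2)"
    unfolding eqA using L2_step2 L2_int by blast
  define Q where "Q = (\<Sum>t<T. \<Sum>k<E. Av t k)"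
  have TE0: "real T * real E > 0" using T E by simp
  have ex: "measure_pmf.expectation (pmf_of_set ({..<T} \<times> {..<E}))
       (\<lambda>(t, k). \<integral>\<omega>. (norm (\<Sum>i<C. pw p C i *\<^sub>R
          gradF i (avg_iter C p \<beta> \<gamma> E G w0 (\<lambda>i t k. xi i t k \<omega>) t k)))\<^sup>2 \<partial>M) = Q / (real T * real E)"
  proof -
    have "(0, 0) \<in> {..<T} \<times> {..<E}" using T E by auto
    then have ne: "{..<T} \<times> {..<E} \<noteq> {}" by blast
    have "measure_pmf.expectation (pmf_of_set ({..<T} \<times> {..<E}))
       (\<lambda>(t, k). \<integral>\<omega>. (norm (\<Sum>i<C. pw p C i *\<^sub>R
          gradF i (avg_iter C p \<beta> \<gamma> E G w0 (\<lambda>i t k. xi i t k \<omega>) t k)))\<^sup>2 \<partial>M)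
      = measure_pmf.expectation (pmf_of_set ({..<T} \<times> {..<E})) (\<lambda>(t, k). Av t k)"
      unfolding eqA Av_def by simp
    also have "\<dots> = (\<Sum>x\<in>{..<T} \<times> {..<E}. (\<lambda>(t, k). Av t k) x) / card ({..<T} \<times> {..<E})"
      using ne by (subst integral_pmf_of_set) auto
    also have "(\<Sum>x\<in>{..<T} \<times> {..<E}. (\<lambda>(t, k). Av t k) x) = Q"
      unfolding Q_def by (rule sum.cartesian_product[symmetric])
    finally show ?thesis by (simp add: card_cartesian_product)
  qed
  define D where "D = (\<Sum>i<C. pw p C i * F i w0) - finf"
  define S where "S = (\<Sum>i<C. (pw p C i)\<^sup>2) * \<sigma>\<^sup>2"
  define c where "c = 3 * \<beta>\<^sup>2 + 3 + 12 * (1 - \<beta>)\<^sup>2"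
  define Z where "Z = \<gamma> * (L\<^sup>2 * (c * (\<gamma>\<^sup>2 * ((real E)\<^sup>2 * Gb\<^sup>2)))) + \<gamma> * (L * \<gamma>) * S"
  have g: "\<gamma> > 0" by (rule gamma_pos)
  have sb: "\<gamma> * Q \<le> 2 * D + real T * real E * Z"
    using sum_bound unfolding Q_def D_def Z_def S_def c_def Fb_def P_def by simp
  have X: "Q / (real T * real E) \<le> 2 * D / (\<gamma> * (real T * real E))
      + L\<^sup>2 * (3 * \<beta>\<^sup>2 + 3 + 12 * (1 - \<beta>)\<^sup>2) * \<gamma>\<^sup>2 * (real E)\<^sup>2 * Gb\<^sup>2 + L * \<gamma> * S"
  proof -
    have gTE: "\<gamma> * (real T * real E) > 0" using g TE0 by simp
    have "Q / (real T * real E) = (\<gamma> * Q) / (\<gamma> * (real T * real E))" using g by simp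
    also have "\<dots> \<le> (2 * D + real T * real E * Z) / (\<gamma> * (real T * real E))"
      using sb gTE by (intro divide_right_mono) auto
    also have "\<dots> = 2 * D / (\<gamma> * (real T * real E)) + Z / \<gamma>"
      using g TE0 T E by (simp add: add_divide_distrib)
    also have "Z / \<gamma> = L\<^sup>2 * (3 * \<beta>\<^sup>2 + 3 + 12 * (1 - \<beta>)\<^sup>2) * \<gamma>\<^sup>2 * (real E)\<^sup>2 * Gb\<^sup>2 + L * \<gamma> * S"
      unfolding Z_def c_def using g by (simp add: field_simps)
    finally show ?thesis by (simp only: add.assoc)
  qed
  have fin: "Q / (real T * real E) \<le> 1 / sqrt (real T) * (4 * L * D / sqrt (real E) + S / (2 * sqrt (real E)))
            + real E * Gb\<^sup>2 / real T * (4 + (1 - \<beta>)\<^sup>2 + 8 * (1 - 1 / \<beta>)\<^sup>2)"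
    by (rule final_arith[OF _ _ L _ \<beta> X]) (use T E \<gamma> in auto)
  show ?thesis using int fin unfolding ex D_def S_def by simp
qed

end

theorem theorem4:
  fixes M :: "'a measure" and X :: "'x measure"
    and C E T :: nat and p :: "nat \<Rightarrow> nat \<Rightarrow> real"
    and F :: "nat \<Rightarrow> 'v::euclidean_space \<Rightarrow> real" and gradF :: "nat \<Rightarrow> 'v \<Rightarrow> 'v"
    and G :: "nat \<Rightarrow> 'v \<Rightarrow> 'x \<Rightarrow> 'v" and xi :: "nat \<Rightarrow> nat \<Rightarrow> nat \<Rightarrow> 'a \<Rightarrow> 'x"
    and w0 :: 'v and \<beta> \<gamma> L \<sigma> Gb finf :: real
  assumes M: "prob_space M"
    and p_nonneg: "\<And>i n. i < C \<Longrightarrow> n < C \<Longrightarrow> p i n \<ge> 0"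
    and p_sym: "\<And>i n. i < C \<Longrightarrow> n < C \<Longrightarrow> p i n = p n i"
    and p_diag: "\<And>i. i < C \<Longrightarrow> p i i = 0"
    and p_sum: "(\<Sum>i<C. \<Sum>n<C. p i n) = 1"
    and p_pos: "\<And>i. i < C \<Longrightarrow> pw p C i > 0"
    and \<beta>: "0 < \<beta>" "\<beta> < 1"
    and E: "E \<ge> 1" and T: "T \<ge> 1"
    and L: "L > 0"
    and \<gamma>: "\<gamma> = 1 / (2 * L * sqrt (real T * real E))"
    and grad: "\<And>i x. i < C \<Longrightarrow> (F i has_derivative (\<lambda>h. gradF i x \<bullet> h)) (at x)"
    and smooth: "\<And>i x y. i < C \<Longrightarrow> norm (gradF i x - gradF i y) \<le> L * norm (x - y)"
    and lower: "\<And>x. (\<Sum>i<C. pw p C i * F i x) \<ge> finf"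
    and xi_meas: "\<And>i t k. i < C \<Longrightarrow> t < T \<Longrightarrow> k < E \<Longrightarrow> xi i t k \<in> M \<rightarrow>\<^sub>M X"
    and xi_indep: "prob_space.indep_vars M (\<lambda>_. X) (\<lambda>(i, t, k). xi i t k)
                     ({..<C} \<times> {..<T} \<times> {..<E})"
    and G_meas: "\<And>i. i < C \<Longrightarrow> (\<lambda>(w, x). G i w x) \<in> borel \<Otimes>\<^sub>M X \<rightarrow>\<^sub>M borel"
    and unbiased: "\<And>i t k w. i < C \<Longrightarrow> t < T \<Longrightarrow> k < E \<Longrightarrow>
        integrable M (\<lambda>\<omega>. G i w (xi i t k \<omega>)) \<and>
        (\<integral>\<omega>. G i w (xi i t k \<omega>) \<partial>M) = gradF i w"
    and variance: "\<And>i t k. i < C \<Longrightarrow> t < T \<Longrightarrow> k < E \<Longrightarrow>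
        (let wt = (\<lambda>\<omega>. pert_iter C p \<beta> \<gamma> E G w0 (\<lambda>i t k. xi i t k \<omega>) t i k)
         in integrable M (\<lambda>\<omega>. (norm (G i (wt \<omega>) (xi i t k \<omega>) - gradF i (wt \<omega>)))\<^sup>2) \<and>
            (\<integral>\<omega>. (norm (G i (wt \<omega>) (xi i t k \<omega>) - gradF i (wt \<omega>)))\<^sup>2 \<partial>M) \<le> \<sigma>\<^sup>2)"
    and gnorm: "\<And>i t k. i < C \<Longrightarrow> t < T \<Longrightarrow> k < E \<Longrightarrow>
        (let wt = (\<lambda>\<omega>. pert_iter C p \<beta> \<gamma> E G w0 (\<lambda>i t k. xi i t k \<omega>) t i k)
         in integrable M (\<lambda>\<omega>. (norm (G i (wt \<omega>) (xi i t k \<omega>)))\<^sup>2) \<and>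
            (\<integral>\<omega>. (norm (G i (wt \<omega>) (xi i t k \<omega>)))\<^sup>2 \<partial>M) \<le> Gb\<^sup>2)"
  shows
    "(\<forall>t<T. \<forall>k<E. integrable M (\<lambda>\<omega>. (norm (\<Sum>i<C. pw p C i *\<^sub>R
          gradF i (avg_iter C p \<beta> \<gamma> E G w0 (\<lambda>i t k. xi i t k \<omega>) t k)))\<^sup>2)) \<and>
     measure_pmf.expectation (pmf_of_set ({..<T} \<times> {..<E}))
       (\<lambda>(t, k). \<integral>\<omega>. (norm (\<Sum>i<C. pw p C i *\<^sub>R
          gradF i (avg_iter C p \<beta> \<gamma> E G w0 (\<lambda>i t k. xi i t k \<omega>) t k)))\<^sup>2 \<partial>M)
     \<le> 1 / sqrt (real T) *
         (4 * L * ((\<Sum>i<C. pw p C i * F i w0) - finf) / sqrt (real E)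
          + (\<Sum>i<C. (pw p C i)\<^sup>2) * \<sigma>\<^sup>2 / (2 * sqrt (real E)))
       + real E * Gb\<^sup>2 / real T * (4 + (1 - \<beta>)\<^sup>2 + 8 * (1 - 1 / \<beta>)\<^sup>2)"
proof -
  have "fl M X C E T p F gradF G xi w0 \<beta> \<gamma> L \<sigma> Gb finf"
    unfolding fl_def using assms by blast
  then show ?thesis by (rule fl.main_loc)
qed

end
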